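(* Let $q$ be a prime power, $m,n\ge 1$, and let $\mathcal{C}$ be an $(n,k)$ linear code over $\mathrm{GF}(q^m)$ with rank weight enumerator $W^{\mathrm{R}}_{\mathcal{C}}(x,y)=\sum_{i=0}^n A_i y^i x^{n-i}$, and let $W^{\mathrm{R}}_{\mathcal{C}^\perp}(x,y)=\sum_{j=0}^n B_j y^j x^{n-j}$ be the rank weight enumerator of its dual code $\mathcal{C}^\perp$. Then $$W^{\mathrm{R}}_{\mathcal{C}^\perp}(x,y)=\frac{1}{|\mathcal{C}|}\,\bar W^{\mathrm{R}}_{\mathcal{C}}\big(x+(q^m-1)y,\;x-y\big),$$ where $\bar W^{\mathrm{R}}_{\mathcal{C}}$ is the $q$-transform of $W^{\mathrm{R}}_{\mathcal{C}}$; equivalently, $$\sum_{j=0}^n B_j y^j x^{n-j}=q^{m(k-n)}\sum_{i=0}^n A_i\,(x-y)^{[i]}*\big[x+(q^m-1)y\big]^{[n-i]}.$$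
   Context: For $\mathbf{x}=(x_0,\dots,x_{n-1})\in\mathrm{GF}(q^m)^n$, the rank $\mathrm{rk}(\mathbf{x})$ is the dimension over $\mathrm{GF}(q)$ of the $\mathrm{GF}(q)$-linear span of $x_0,\dots,x_{n-1}$ in $\mathrm{GF}(q^m)$ (equivalently, the rank over $\mathrm{GF}(q)$ of the $m\times n$ matrix obtained by expanding each coordinate in a basis of $\mathrm{GF}(q^m)$ over $\mathrm{GF}(q)$). An $(n,k)$ linear code is a $k$-dimensional $\mathrm{GF}(q^m)$-subspace of $\mathrm{GF}(q^m)^n$; its dual is $\mathcal{C}^\perp=\{\mathbf{u}:\sum_i u_ic_i=0\ \forall \mathbf{c}\in\mathcal{C}\}$. The rank weight enumerator of $\mathcal{C}$ is $\sum_{\mathbf{c}\in\mathcal{C}}y^{\mathrm{rk}(\mathbf{c})}x^{n-\mathrm{rk}(\mathbf{c})}$. $q$-product: for homogeneous polynomials $a(x,y;m)=\sum_{i=0}^r a_i(m)y^ix^{r-i}$ and $b(x,y;m)=\sum_{j=0}^s b_j(m)y^jx^{s-j}$ of degrees $r,s$, whose coefficients are real functions of $m$ (taken to be zero for indices outside the given ranges), $a*b$ is the homogeneous polynomial of degree $r+s$ given by $\sum_{u=0}^{r+s}c_u(m)y^ux^{r+s-u}$ with $c_u(m)=\sum_{i=0}^u q^{is}a_i(m)b_{u-i}(m-i)$. The $q$-powers are $a^{[0]}=1$ and $a^{[l]}=a^{[l-1]}*a$ for $l\ge1$. Here $x+(q^m-1)y$ is the degree-1 polynomial with coefficients $a_0(m)=1$,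 $a_1(m)=q^m-1$, and $x-y$ has coefficients $1,-1$. The $q$-transform of $a(x,y;m)=\sum_{i=0}^r a_i(m)y^ix^{r-i}$ is $\bar a(x,y;m)=\sum_{i=0}^r a_i(m)\,y^{[i]}*x^{[r-i]}$, and $\bar a(X,Y)$ means $\sum_i a_i(m)\,Y^{[i]}*X^{[r-i]}$. *)

theory Defs
  imports "HOL-Analysis.Analysis"
begin

section \<open>Subfields, GF(q)-span and rank weight\<close>

definition is_subfield :: "'a::field set \<Rightarrow> bool" where
  "is_subfield F \<longleftrightarrow> 0 \<in> F \<and> 1 \<in> F \<and>
     (\<forall>a\<in>F. \<forall>b\<in>F. a + b \<in> F \<and> a * b \<in> F) \<and>
     (\<forall>a\<in>F. - a \<in> F \<and> inverse a \<in> F)"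

text \<open>The F-linear span of a set S of field elements.\<close>
definition Fspan :: "'a::field set \<Rightarrow> 'a set \<Rightarrow> 'a set" where
  "Fspan F S = {(\<Sum>s\<in>T. c s * s) | T c. finite T \<and> T \<subseteq> S \<and> (\<forall>s. c s \<in> F)}"

text \<open>Rank of a vector: dimension over F of the F-span of its coordinates,
  i.e. the least size of a set whose F-span contains all coordinates.\<close>
definition rk :: "'a::field set \<Rightarrow> 'a ^ 'n \<Rightarrow> nat" where
  "rk F x = (LEAST d. \<exists>B. finite B \<and> card B = d \<and> range (\<lambda>i. x $ i) \<subseteq> Fspan F B)"

definition dual_code :: "('a::field ^ 'n) set \<Rightarrow> ('a ^ 'n) set" where
  "dual_code C = {u. \<forall>c\<in>C. (\<Sum>i\<in>UNIV. u $ i * c $ i) = 0}"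

section \<open>Homogeneous polynomials with m-dependent coefficients\<close>

text \<open>A homogeneous polynomial (degree r, coefficients a i m) where
  a i m is the coefficient of y^i x^(r-i); m ranges over integers since
  the q-product shifts m downwards.\<close>
type_synonym hpoly = "nat \<times> (nat \<Rightarrow> int \<Rightarrow> real)"

definition hc :: "hpoly \<Rightarrow> nat \<Rightarrow> int \<Rightarrow> real" where
  "hc a i m = (if i \<le> fst a then snd a i m else 0)"

definition qprod :: "nat \<Rightarrow> hpoly \<Rightarrow> hpoly \<Rightarrow> hpoly" where
  "qprod q a b = (fst a + fst b,
     \<lambda>u m. \<Sum>i=0..u. real q ^ (i * fst b) * hc a i m * hc b (u - i) (m - int i))"

primrec qpow :: "nat \<Rightarrow> hpoly \<Rightarrow> nat \<Rightarrow> hpoly" where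
  "qpow q a 0 = (0, \<lambda>i m. if i = 0 then 1 else 0)"
| "qpow q a (Suc l) = qprod q (qpow q a l) a"

text \<open>x + (q^m - 1) y and x - y\<close>
definition Xpoly :: "nat \<Rightarrow> hpoly" where
  "Xpoly q = (1, \<lambda>i m. if i = 0 then 1 else if i = 1 then real q powi m - 1 else 0)"

definition Ypoly :: hpoly where
  "Ypoly = (1, \<lambda>i m. if i = 0 then 1 else if i = 1 then -1 else 0)"

text \<open>q-transform evaluated at (X, Y): sum_i a_i(m) Y^[i] * X^[r-i].\<close>
definition qtransform_at :: "nat \<Rightarrow> hpoly \<Rightarrow> hpoly \<Rightarrow> hpoly \<Rightarrow> hpoly" where
  "qtransform_at q a X Y = (fst a * fst X,
     \<lambda>u m. \<Sum>i=0..fst a. hc a i m * hc (qprod q (qpow q Y i) (qpow q X (fst a - i))) u m)"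

text \<open>Rank weight enumerator of a code C (coefficient i = number of codewords of rank i).\<close>
definition rank_we :: "'a::field set \<Rightarrow> ('a ^ 'n) set \<Rightarrow> hpoly" where
  "rank_we F C = (CARD('n), \<lambda>i m. real (card {c\<in>C. rk F c = i}))"

end

theory Submission
  imports Defs
begin

(* ---- part Alg ---- *)
definition alpha :: "real \<Rightarrow> nat \<Rightarrow> nat \<Rightarrow> real" where
  "alpha q N k = (\<Prod>t<k. q ^ N - q ^ t)"

definition gb :: "real \<Rightarrow> nat \<Rightarrow> nat \<Rightarrow> real" where
  "gb q N k = alpha q N k / alpha q k k"

definition GG :: "real \<Rightarrow> nat \<Rightarrow> int \<Rightarrow> real" where
  "GG q N k = (if k < 0 then 0 else gb q N (nat k))"

lemma alpha_0[simp]: "alpha q N 0 = 1" by (simp add: alpha_def)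

lemma alpha_Suc: "alpha q N (Suc k) = alpha q N k * (q ^ N - q ^ k)"
  by (simp add: alpha_def)

lemma alpha_Suc_Suc: "alpha q (Suc N) (Suc k) = (q ^ Suc N - 1) * q ^ k * alpha q N k"
proof -
  have "alpha q (Suc N) (Suc k) = (q ^ Suc N - q ^ 0) * (\<Prod>t<k. q ^ Suc N - q ^ Suc t)"
    unfolding alpha_def by (rule prod.lessThan_Suc_shift)
  also have "(\<Prod>t<k. q ^ Suc N - q ^ Suc t) = (\<Prod>t<k. q * (q ^ N - q ^ t))"
    by (simp add: algebra_simps)
  also have "\<dots> = q ^ k * alpha q N k"
    by (simp add: alpha_def prod.distrib)
  finally show ?thesis by simp
qed

lemma alpha_big: "N < k \<Longrightarrow> alpha q N k = 0"
  unfolding alpha_def by (rule prod_zero) auto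

lemma alpha_pos: "1 < q \<Longrightarrow> k \<le> N \<Longrightarrow> alpha q N k > 0"
  unfolding alpha_def by (rule prod_pos) (auto intro!: power_strict_increasing)

lemma gb_0[simp]: "1 < q \<Longrightarrow> gb q N 0 = 1" by (simp add: gb_def)

lemma gb_big: "N < k \<Longrightarrow> gb q N k = 0" by (simp add: gb_def alpha_big)

lemma gb_self: "1 < q \<Longrightarrow> gb q N N = 1"
  using alpha_pos[of q N N] by (simp add: gb_def)

lemma gbSS: assumes "1 < q"
  shows "gb q (Suc N) (Suc k) * (q ^ Suc k - 1) = (q ^ Suc N - 1) * gb q N k"
proof -
  have c: "q ^ k \<noteq> 0" using assms by simp
  have b: "alpha q k k \<noteq> 0" using alpha_pos[OF assms, of k k] by simp
  have y: "q ^ Suc k - 1 \<noteq> 0" using one_less_power[OF assms, of "Suc k"] by simp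
  have "gb q (Suc N) (Suc k) = ((q ^ Suc N - 1) * q ^ k * alpha q N k) / ((q ^ Suc k - 1) * q ^ k * alpha q k k)"
    unfolding gb_def alpha_Suc_Suc ..
  moreover have "\<And>x y c a b::real. c \<noteq> 0 \<Longrightarrow> b \<noteq> 0 \<Longrightarrow> y \<noteq> 0 \<Longrightarrow> (x * c * a) / (y * c * b) * y = x * (a / b)"
    by (simp add: field_simps)
  ultimately show ?thesis using b c y by (simp add: gb_def)
qed

lemma gbS: assumes "1 < q"
  shows "gb q N (Suc k) * ((q ^ Suc k - 1) * q ^ k) = gb q N k * (q ^ N - q ^ k)"
proof -
  have c: "q ^ k \<noteq> 0" using assms by simp
  have b: "alpha q k k \<noteq> 0" using alpha_pos[OF assms, of k k] by simp
  have y: "q ^ Suc k - 1 \<noteq> 0" using one_less_power[OF assms, of "Suc k"] by simp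
  have "gb q N (Suc k) = (alpha q N k * (q ^ N - q ^ k)) / ((q ^ Suc k - 1) * q ^ k * alpha q k k)"
    by (simp only: gb_def alpha_Suc_Suc alpha_Suc[of q N k])
  moreover have "\<And>x y c a b::real. c \<noteq> 0 \<Longrightarrow> b \<noteq> 0 \<Longrightarrow> y \<noteq> 0 \<Longrightarrow> (a * x) / (y * c * b) * (y * c) = (a / b) * x"
    by (simp add: field_simps)
  ultimately show ?thesis using b c y by (simp add: gb_def)
qed

lemma aux_p1:
  fixes G1 g0 g1 q Q P :: real
  assumes "q*Q - 1 \<noteq> 0" "Q \<noteq> 0" "G1*(q*Q - 1) = (q*P - 1)*g0" "g1*((q*Q-1)*Q) = g0*(P - Q)"
  shows "G1 = g0 + q*Q*g1" "q*Q*G1 = q*P*g0 + q*Q*g1"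
proof -
  have "(G1 - g0 - q*Q*g1) * ((q*Q-1)*Q) = (G1*(q*Q-1))*Q - g0*(q*Q-1)*Q - q*Q*(g1*((q*Q-1)*Q))"
    by (simp add: algebra_simps)
  also have "\<dots> = ((q*P-1)*g0)*Q - g0*(q*Q-1)*Q - q*Q*(g0*(P-Q))" using assms by simp
  also have "\<dots> = 0" by (simp add: algebra_simps)
  finally show "G1 = g0 + q*Q*g1" using assms(1,2) by simp
  have "(q*Q*G1 - q*P*g0 - q*Q*g1) * ((q*Q-1)*Q) = q*Q*(G1*(q*Q-1))*Q - q*P*g0*(q*Q-1)*Q - q*Q*(g1*((q*Q-1)*Q))"
    by (simp add: algebra_simps)
  also have "\<dots> = q*Q*((q*P-1)*g0)*Q - q*P*g0*(q*Q-1)*Q - q*Q*(g0*(P-Q))" using assms by simp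
  also have "\<dots> = 0" by (simp add: algebra_simps)
  finally show "q*Q*G1 = q*P*g0 + q*Q*g1" using assms(1,2) by simp
qed

lemma pascal1: assumes "1 < q"
  shows "gb q (Suc N) (Suc k) = gb q N k + q ^ Suc k * gb q N (Suc k)"
  using aux_p1(1)[of q "q^k" "gb q (Suc N) (Suc k)" "q^N" "gb q N k" "gb q N (Suc k)"]
    gbSS[OF assms, of N k] gbS[OF assms, of N k] one_less_power[OF assms, of "Suc k"] assms
  by simp

lemma pascal2: assumes "1 < q"
  shows "q ^ Suc k * gb q (Suc N) (Suc k) = q ^ Suc N * gb q N k + q ^ Suc k * gb q N (Suc k)"
  using aux_p1(2)[of q "q^k" "gb q (Suc N) (Suc k)" "q^N" "gb q N k" "gb q N (Suc k)"]
    gbSS[OF assms, of N k] gbS[OF assms, of N k] one_less_power[OF assms, of "Suc k"] assms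
  by simp

lemma GG_neg: "k < 0 \<Longrightarrow> GG q N k = 0" by (simp add: GG_def)

lemma GG_pascal1: assumes "1 < q"
  shows "GG q (Suc N) k = GG q N (k - 1) + q powi k * GG q N k"
proof (cases "k < 0")
  case True then show ?thesis by (simp add: GG_def)
next
  case False
  then obtain k' where k: "k = int k'" by (metis nonneg_int_cases not_less)
  show ?thesis
  proof (cases k')
    case 0 then show ?thesis using k assms by (simp add: GG_def)
  next
    case (Suc k'')
    have pk: "q powi k = q ^ Suc k''" using k Suc by (metis power_int_of_nat)
    have a: "nat (k - 1) = k''" "nat k = Suc k''" "q powi k = q ^ Suc k''" "\<not> k - 1 < 0" "\<not> k < 0"
      using k Suc pk by auto
    show ?thesis unfolding GG_def a using pascal1[OF assms, of N k''] a(4,5) by simp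
  qed
qed

lemma GG_pascal2: assumes "1 < q"
  shows "q powi k * GG q (Suc N) k = q ^ Suc N * GG q N (k - 1) + q powi k * GG q N k"
proof (cases "k < 0")
  case True then show ?thesis by (simp add: GG_def)
next
  case False
  then obtain k' where k: "k = int k'" by (metis nonneg_int_cases not_less)
  show ?thesis
  proof (cases k')
    case 0 then show ?thesis using k assms by (simp add: GG_def)
  next
    case (Suc k'')
    have pk: "q powi k = q ^ Suc k''" using k Suc by (metis power_int_of_nat)
    have a: "nat (k - 1) = k''" "nat k = Suc k''" "q powi k = q ^ Suc k''" "\<not> k - 1 < 0" "\<not> k < 0"
      using k Suc pk by auto
    show ?thesis unfolding GG_def a using pascal2[OF assms, of k'' N] a(4,5) by simp
  qed
qed


lemma hc_pair: "hc (r, f) i m = (if i \<le> r then f i m else 0)" by (simp add: hc_def)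

lemma hc_big: "fst a < i \<Longrightarrow> hc a i m = 0" by (simp add: hc_def)

lemma fst_qprod[simp]: "fst (qprod q a b) = fst a + fst b" by (simp add: qprod_def)

lemma fst_qpow[simp]: "fst (qpow q a l) = l * fst a" by (induction l) auto

lemma fst_Xpoly[simp]: "fst (Xpoly q) = 1" by (simp add: Xpoly_def)
lemma fst_Ypoly[simp]: "fst Ypoly = 1" by (simp add: Ypoly_def)

lemma hc_qprod:
  "hc (qprod q a b) u m = (\<Sum>i=0..u. real q ^ (i * fst b) * hc a i m * hc b (u - i) (m - int i))"
proof (cases "u \<le> fst a + fst b")
  case True then show ?thesis unfolding qprod_def hc_pair by simp
next
  case False
  have "hc (qprod q a b) u m = 0" using False by (simp add: hc_def)
  moreover have "(\<Sum>i=0..u. real q ^ (i * fst b) * hc a i m * hc b (u - i) (m - int i)) = 0"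
  proof (rule sum.neutral, rule ballI)
    fix i assume "i \<in> {0..u}"
    show "real q ^ (i * fst b) * hc a i m * hc b (u - i) (m - int i) = 0"
    proof (cases "i \<le> fst a")
      case True then have "fst b < u - i" using False by auto
      then show ?thesis by (simp add: hc_big)
    next
      case False then show ?thesis by (simp add: hc_big)
    qed
  qed
  ultimately show ?thesis by simp
qed

lemma sum_tri: "(\<Sum>l\<le>(u::nat). \<Sum>p\<le>u-l. g l p) = (\<Sum>k\<le>u. \<Sum>l\<le>k. g l (k-l))"
proof -
  have "(\<Sum>l\<le>u. \<Sum>p\<le>u-l. g l p) = (\<Sum>(l,p)\<in>Sigma {..u} (\<lambda>l. {..u-l}). g l p)"
    using sum.Sigma[of "{..u}" "\<lambda>l. {..u-l}" g] by simp
  also have "Sigma {..u} (\<lambda>l. {..u-l}) = {(i,j). i+j \<le> u}" by auto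
  also have "(\<Sum>(l,p)\<in>{(i,j). i+j \<le> u}. g l p) = (\<Sum>k\<le>u. \<Sum>l\<le>k. g l (k-l))"
    by (rule sum.triangle_reindex_eq)
  finally show ?thesis .
qed

lemma hc_assoc: "hc (qprod q a (qprod q b c)) u m = hc (qprod q (qprod q a b) c) u m"
proof -
  define s where "s = fst b"
  define t where "t = fst c"
  define g where "g = (\<lambda>l p. real q ^ (l * s) * hc a l m * hc b p (m - int l) *
      (real q ^ ((l+p) * t) * hc c (u - (l+p)) (m - int (l+p))))"
  have "hc (qprod q a (qprod q b c)) u m =
     (\<Sum>l\<le>u. real q ^ (l * (s + t)) * hc a l m *
        (\<Sum>p=0..u-l. real q ^ (p * t) * hc b p (m - int l) * hc c (u - l - p) (m - int l - int p)))"
    by (simp add: hc_qprod s_def t_def atLeast0AtMost)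
  also have "\<dots> = (\<Sum>l\<le>u. \<Sum>p\<le>u-l. g l p)"
    unfolding sum_distrib_left atLeast0AtMost
    by (rule sum.cong[OF refl], rule sum.cong[OF refl])
       (simp add: g_def power_add add_mult_distrib algebra_simps diff_diff_add)
  also have "\<dots> = (\<Sum>k\<le>u. \<Sum>l\<le>k. g l (k-l))" by (rule sum_tri)
  also have "\<dots> = (\<Sum>k\<le>u. real q ^ (k * t) *
        (\<Sum>l=0..k. real q ^ (l * s) * hc a l m * hc b (k - l) (m - int l)) * hc c (u - k) (m - int k))"
    unfolding sum_distrib_left sum_distrib_right atLeast0AtMost
    by (rule sum.cong[OF refl], rule sum.cong[OF refl]) (auto simp: g_def algebra_simps)
  also have "\<dots> = hc (qprod q (qprod q a b) c) u m"
    by (simp add: hc_qprod[of q "qprod q a b" c] hc_qprod[of q a b] s_def t_def atLeast0AtMost)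
  finally show ?thesis .
qed

lemma hc_qpow0: "hc (qpow q a 0) u m = (if u = 0 then 1 else 0)" by (simp add: hc_def)

lemma hc_qprod_one: "hc (qprod q a (qpow q b 0)) u m = hc a u m"
proof -
  have "hc (qprod q a (qpow q b 0)) u m = (\<Sum>i=0..u. (if i = u then hc a u m else 0))"
    unfolding hc_qprod by (rule sum.cong) (auto simp: hc_pair)
  also have "\<dots> = hc a u m" by simp
  finally show ?thesis .
qed

lemma hc_X: "hc (Xpoly q) v m' = (if v = 0 then 1 else if v = 1 then real q powi m' - 1 else 0)"
  by (simp add: hc_def Xpoly_def)
lemma hc_Y: "hc Ypoly v m' = (if v = 0 then 1 else if v = 1 then -1 else 0)"
  by (simp add: hc_def Ypoly_def)

lemma two_terms:
  assumes "\<And>i. i < u \<Longrightarrow> f i = 0"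
  shows "(\<Sum>i=0..Suc u. f i) = f u + f (Suc u)"
proof -
  have "(\<Sum>i=0..Suc u. f i) = (\<Sum>i\<in>{u, Suc u}. f i)"
    by (rule sum.mono_neutral_right) (auto simp: assms)
  then show ?thesis by simp
qed

lemma hc_qprod_X0: "hc (qprod q a (Xpoly q)) 0 m = hc a 0 m"
  by (simp add: hc_qprod hc_X)

lemma hc_qprod_XS: assumes "q > 0"
  shows "hc (qprod q a (Xpoly q)) (Suc u) m = real q ^ Suc u * hc a (Suc u) m + (real q powi m - real q ^ u) * hc a u m"
proof -
  have "hc (qprod q a (Xpoly q)) (Suc u) m =
     real q ^ u * hc a u m * (real q powi (m - int u) - 1) + real q ^ Suc u * hc a (Suc u) m"
    unfolding hc_qprod fst_Xpoly
    by (subst two_terms) (auto simp: hc_X Suc_diff_le)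
  also have "real q ^ u * (real q powi (m - int u)) = real q powi m"
    using assms by (simp add: power_int_diff power_int_of_nat)
  ultimately show ?thesis by (simp add: algebra_simps)
qed

lemma hc_qprod_Y0: "hc (qprod q a Ypoly) 0 m = hc a 0 m"
  by (simp add: hc_qprod hc_Y)

lemma hc_qprod_YS:
  shows "hc (qprod q a Ypoly) (Suc u) m = real q ^ Suc u * hc a (Suc u) m + (0 - real q ^ u) * hc a u m"
  unfolding hc_qprod fst_Ypoly
  by (subst two_terms) (auto simp: hc_Y Suc_diff_le)


lemma GG_zero: "GG q 0 s = (if s = 0 then 1 else 0)" if "1 < q"
  using that by (auto simp: GG_def gb_big)

lemma term_id:
  fixes q c :: real and n j :: nat and s :: int
  assumes q: "1 < q" and j: "j \<le> n"
  shows "q ^ j * GG q (Suc (n-j)) (int (Suc n) - s) + (c - q ^ j) * GG q (n-j) (int (Suc n) - s)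
       = q powi s * GG q (n-j) (int n - s) + c * GG q (n-j) (int n - (s - 1))"
proof -
  define k where "k = int (Suc n) - s"
  define N where "N = n - j"
  have qk: "q powi k \<noteq> 0" using q by simp
  have p2: "q powi k * (GG q (Suc N) k - GG q N k) = q ^ Suc N * GG q N (k - 1)"
    using GG_pascal2[OF q, of k N] by (simp add: algebra_simps)
  have e: "q ^ j * q ^ Suc N = q powi k * q powi s"
  proof -
    have "q ^ j * q ^ Suc N = q ^ Suc n" using j by (simp add: N_def flip: power_add)
    also have "\<dots> = q powi (k + s)" by (simp add: k_def power_int_of_nat[symmetric])
    also have "\<dots> = q powi k * q powi s" using q by (simp add: power_int_add)
    finally show ?thesis .
  qed
  have "q powi k * (q ^ j * (GG q (Suc N) k - GG q N k)) = q powi k * (q powi s * GG q N (k - 1))"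
    using p2 e by (metis (no_types, lifting) mult.assoc mult.left_commute)
  then have a: "q ^ j * (GG q (Suc N) k - GG q N k) = q powi s * GG q N (k - 1)"
    using qk q by auto
  have k1: "k - 1 = int n - s" "k = int n - (s - 1)" by (simp_all add: k_def)
  show ?thesis using a unfolding k_def[symmetric] N_def[symmetric] k1[symmetric]
    by (simp add: algebra_simps)
qed

lemma rec_sum:
  fixes a b :: "nat \<Rightarrow> real" and q c :: real
  assumes q: "1 < q" and b0: "b 0 = a 0"
    and bS: "\<And>j. b (Suc j) = q ^ Suc j * a (Suc j) + (c - q ^ j) * a j"
    and az: "\<And>j. n < j \<Longrightarrow> a j = 0"
  shows "(\<Sum>j=0..Suc n. b j * GG q (Suc n - j) (int (Suc n) - s))
       = q powi s * (\<Sum>j=0..n. a j * GG q (n - j) (int n - s))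
         + c * (\<Sum>j=0..n. a j * GG q (n - j) (int n - (s - 1)))"
proof -
  define H where "H j = GG q (Suc n - j) (int (Suc n) - s)" for j
  define b1 where "b1 j = q ^ j * a j" for j
  define b2 where "b2 j = (if j = 0 then 0 else (c - q ^ (j - 1)) * a (j - 1))" for j
  have bb: "b j = b1 j + b2 j" for j
    by (cases j) (simp_all add: b1_def b2_def b0 bS)
  have s1: "(\<Sum>j=0..Suc n. b1 j * H j) = (\<Sum>j=0..n. q ^ j * a j * GG q (Suc (n - j)) (int (Suc n) - s))"
  proof -
    have "(\<Sum>j=0..Suc n. b1 j * H j) = (\<Sum>j=0..n. b1 j * H j) + b1 (Suc n) * H (Suc n)" by simp
    also have "b1 (Suc n) = 0" by (simp add: b1_def az)
    finally show ?thesis unfolding H_def b1_def by (simp add: Suc_diff_le)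
  qed
  have s2: "(\<Sum>j=0..Suc n. b2 j * H j) = (\<Sum>j=0..n. (c - q ^ j) * a j * GG q (n - j) (int (Suc n) - s))"
    by (subst sum.atLeast0_atMost_Suc_shift) (simp add: b2_def H_def)
  have "(\<Sum>j=0..Suc n. b j * H j) = (\<Sum>j=0..Suc n. b1 j * H j) + (\<Sum>j=0..Suc n. b2 j * H j)"
    by (simp add: bb distrib_right sum.distrib)
  also have "\<dots> = (\<Sum>j=0..n. a j * (q ^ j * GG q (Suc (n - j)) (int (Suc n) - s) + (c - q ^ j) * GG q (n - j) (int (Suc n) - s)))"
    unfolding s1 s2 by (simp add: sum.distrib[symmetric] algebra_simps)
  also have "\<dots> = (\<Sum>j=0..n. a j * (q powi s * GG q (n-j) (int n - s) + c * GG q (n-j) (int n - (s - 1))))"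
    by (rule sum.cong[OF refl], subst term_id[OF q], simp_all)
  also have "\<dots> = q powi s * (\<Sum>j=0..n. a j * GG q (n - j) (int n - s))
         + c * (\<Sum>j=0..n. a j * GG q (n - j) (int n - (s - 1)))"
    by (simp add: sum_distrib_left sum.distrib algebra_simps)
  finally show ?thesis unfolding H_def .
qed

definition PP :: "nat \<Rightarrow> int \<Rightarrow> nat \<Rightarrow> nat \<Rightarrow> nat \<Rightarrow> real" where
  "PP q M i n j = hc (qprod q (qpow q Ypoly i) (qpow q (Xpoly q) (n - i))) j M"

definition TT :: "nat \<Rightarrow> int \<Rightarrow> nat \<Rightarrow> nat \<Rightarrow> int \<Rightarrow> real" where
  "TT q M i n s = (\<Sum>j=0..n. PP q M i n j * GG (real q) (n - j) (int n - s))"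

lemma TT_diag: assumes q: "1 < q"
  shows "TT q M i i s = (if s = 0 then 1 else 0)"
proof (induction i arbitrary: s)
  case 0
  have "TT q M 0 0 s = GG (real q) 0 (- s)"
    by (simp add: TT_def PP_def hc_qprod hc_pair)
  then show ?case using q by (simp add: GG_zero)
next
  case (Suc i)
  have PPd: "PP q M k k j = hc (qpow q Ypoly k) j M" for k j
    unfolding PP_def diff_self_eq_0 by (rule hc_qprod_one)
  have "TT q M (Suc i) (Suc i) s = real q powi s * TT q M i i s + 0 * TT q M i i (s - 1)"
    unfolding TT_def PPd
    by (rule rec_sum) (use q in \<open>simp_all add: hc_qprod_Y0 hc_qprod_YS hc_big\<close>)
  then show ?case using Suc by simp
qed

lemma TT_closed: assumes q: "1 < q" and i: "i \<le> n"
  shows "TT q M i n s = (real q powi M) powi s * GG (real q) (n - i) s"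
  using i
proof (induction n arbitrary: s rule: dec_induct)
  case base
  then show ?case using q TT_diag[OF q] by (simp add: GG_zero)
next
  case (step n)
  define Q where "Q = real q powi M"
  have Q0: "Q \<noteq> 0" using q by (simp add: Q_def)
  have PPs: "PP q M i (Suc n) j = hc (qprod q (qprod q (qpow q Ypoly i) (qpow q (Xpoly q) (n - i))) (Xpoly q)) j M" for j
    using step(1) by (simp add: PP_def Suc_diff_le hc_assoc)
  have "TT q M i (Suc n) s = real q powi s * TT q M i n s + Q * TT q M i n (s - 1)"
    unfolding TT_def PPs
    by (rule rec_sum) (use q step(1) in \<open>simp_all add: hc_qprod_X0 hc_qprod_XS hc_big PP_def Q_def\<close>)
  also have "\<dots> = real q powi s * (Q powi s * GG (real q) (n - i) s) + Q * (Q powi (s - 1) * GG (real q) (n - i) (s - 1))"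
    using step(3) by (simp add: Q_def)
  also have "\<dots> = real q powi s * (Q powi s * GG (real q) (n - i) s) + (Q * Q powi (s - 1)) * GG (real q) (n - i) (s - 1)"
    by (simp add: mult.assoc)
  also have "Q * Q powi (s - 1) = Q powi s"
    using Q0 by (simp add: power_int_diff)
  also have "real q powi s * (Q powi s * GG (real q) (n - i) s) + Q powi s * GG (real q) (n - i) (s - 1)
      = Q powi s * GG (real q) (Suc n - i) s"
    using GG_pascal1[of "real q" "n - i" s] q step(1) by (simp add: Suc_diff_le algebra_simps)
  finally show ?case by (simp add: Q_def)
qed

lemma AI: assumes q: "1 < q" and i: "i \<le> n" and u: "u \<le> n"
  shows "(\<Sum>j=0..n. PP q M i n j * gb (real q) (n - j) (n - u)) = (real q powi M) ^ u * gb (real q) (n - i) u"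
proof -
  have "TT q M i n (int u) = (\<Sum>j=0..n. PP q M i n j * gb (real q) (n - j) (n - u))"
    unfolding TT_def using u by (intro sum.cong) (auto simp: GG_def nat_diff_distrib)
  moreover have "TT q M i n (int u) = (real q powi M) ^ u * gb (real q) (n - i) u"
    using TT_closed[OF q i] by (simp add: GG_def power_int_of_nat)
  ultimately show ?thesis by simp
qed

(* ---- part B ---- *)
lemma subfield_basic:
  assumes "is_subfield S"
  shows "0 \<in> S" "1 \<in> S" "a \<in> S \<Longrightarrow> b \<in> S \<Longrightarrow> a + b \<in> S" "a \<in> S \<Longrightarrow> b \<in> S \<Longrightarrow> a * b \<in> S"
    "a \<in> S \<Longrightarrow> - a \<in> S" "a \<in> S \<Longrightarrow> inverse a \<in> S"
    "a \<in> S \<Longrightarrow> b \<in> S \<Longrightarrow> a - b \<in> S" "a \<in> S \<Longrightarrow> b \<in> S \<Longrightarrow> a / b \<in> S"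
proof -
  have h: "0 \<in> S" "1 \<in> S" "\<forall>a\<in>S. \<forall>b\<in>S. a + b \<in> S \<and> a * b \<in> S" "\<forall>a\<in>S. - a \<in> S \<and> inverse a \<in> S"
    using assms unfolding is_subfield_def by blast+
  show "0 \<in> S" "1 \<in> S" using h by blast+
  show "a \<in> S \<Longrightarrow> b \<in> S \<Longrightarrow> a + b \<in> S" "a \<in> S \<Longrightarrow> b \<in> S \<Longrightarrow> a * b \<in> S"
    "a \<in> S \<Longrightarrow> - a \<in> S" "a \<in> S \<Longrightarrow> inverse a \<in> S" using h by blast+
  show "a \<in> S \<Longrightarrow> b \<in> S \<Longrightarrow> a - b \<in> S" using h unfolding diff_conv_add_uminus by blast
  show "a \<in> S \<Longrightarrow> b \<in> S \<Longrightarrow> a / b \<in> S" using h unfolding divide_inverse by blast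
qed

lemma subfield_sum:
  assumes "is_subfield S" "\<And>x. x \<in> A \<Longrightarrow> f x \<in> S"
  shows "sum f A \<in> S"
proof (cases "finite A")
  case True then show ?thesis using assms(2)
    by (induction A rule: finite_induct) (auto intro: subfield_basic[OF assms(1)])
next
  case False then show ?thesis using subfield_basic[OF assms(1)] by simp
qed

lemma subfield_UNIV: "is_subfield (UNIV :: 'a::field set)"
  by (simp add: is_subfield_def)

definition lsp :: "('s \<Rightarrow> 'v \<Rightarrow> 'v) \<Rightarrow> 's set \<Rightarrow> 'v::ab_group_add list \<Rightarrow> 'v set" where
  "lsp sc S vs = {\<Sum>j<length vs. sc (c j) (vs!j) | c. \<forall>j. c j \<in> S}"

context vector_space
begin

lemma lsp_Nil: assumes "is_subfield S" shows "lsp scale S [] = {0}"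
proof -
  have "\<forall>j. (\<lambda>_. 0) j \<in> S" using subfield_basic(1)[OF assms] by simp
  then show ?thesis unfolding lsp_def by auto
qed

lemma lsp_Cons: "lsp scale S (v#vs) = {scale a v + w | a w. a \<in> S \<and> w \<in> lsp scale S vs}"
proof (intro set_eqI iffI)
  fix x assume "x \<in> lsp scale S (v#vs)"
  then obtain c where c: "\<forall>j. c j \<in> S" "x = (\<Sum>j<Suc (length vs). scale (c j) ((v#vs)!j))"
    by (auto simp: lsp_def)
  moreover have "(\<Sum>j<Suc (length vs). scale (c j) ((v#vs)!j)) = scale (c 0) ((v#vs)!0) + (\<Sum>j<length vs. scale (c (Suc j)) ((v#vs)!(Suc j)))"
    by (rule sum.lessThan_Suc_shift)
  ultimately have "x = scale (c 0) v + (\<Sum>j<length vs. scale (c (Suc j)) (vs!j))"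
    by simp
  moreover have "(\<Sum>j<length vs. scale (c (Suc j)) (vs!j)) \<in> lsp scale S vs"
    unfolding lsp_def by (intro CollectI exI[of _ "\<lambda>j. c (Suc j)"] conjI) (use c(1) in auto)
  ultimately show "x \<in> {scale a v + w | a w. a \<in> S \<and> w \<in> lsp scale S vs}" using c(1) by blast
next
  fix x assume "x \<in> {scale a v + w | a w. a \<in> S \<and> w \<in> lsp scale S vs}"
  then obtain a c where ac: "a \<in> S" "\<forall>j. c j \<in> S" "x = scale a v + (\<Sum>j<length vs. scale (c j) (vs!j))"
    by (auto simp: lsp_def)
  define d where "d j = (if j = 0 then a else c (j - 1))" for j
  have "(\<Sum>j<Suc (length vs). scale (d j) ((v#vs)!j)) = scale (d 0) ((v#vs)!0) + (\<Sum>j<length vs. scale (d (Suc j)) ((v#vs)!(Suc j)))"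
    by (rule sum.lessThan_Suc_shift)
  then have "x = (\<Sum>j<Suc (length vs). scale (d j) ((v#vs)!j))"
    using ac by (simp add: d_def)
  moreover have "\<forall>j. d j \<in> S" using ac by (simp add: d_def)
  ultimately show "x \<in> lsp scale S (v#vs)" unfolding lsp_def by force
qed

lemma lsp_closed:
  assumes S: "is_subfield S"
  shows "0 \<in> lsp scale S vs"
    and "x \<in> lsp scale S vs \<Longrightarrow> y \<in> lsp scale S vs \<Longrightarrow> x + y \<in> lsp scale S vs"
    and "a \<in> S \<Longrightarrow> x \<in> lsp scale S vs \<Longrightarrow> scale a x \<in> lsp scale S vs"
    and "v \<in> set vs \<Longrightarrow> v \<in> lsp scale S vs"
proof -
  show "0 \<in> lsp scale S vs"
    unfolding lsp_def using subfield_basic(1)[OF S]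
    by (auto intro!: exI[of _ "\<lambda>_. 0"])
  show "x \<in> lsp scale S vs \<Longrightarrow> y \<in> lsp scale S vs \<Longrightarrow> x + y \<in> lsp scale S vs"
  proof -
    assume "x \<in> lsp scale S vs" "y \<in> lsp scale S vs"
    then obtain c d where "\<forall>j. c j \<in> S" "\<forall>j. d j \<in> S"
      "x = (\<Sum>j<length vs. scale (c j) (vs!j))" "y = (\<Sum>j<length vs. scale (d j) (vs!j))"
      unfolding lsp_def by blast
    moreover have "x + y = (\<Sum>j<length vs. scale (c j + d j) (vs!j))"
      using calculation by (simp add: scale_left_distrib sum.distrib)
    moreover have "\<forall>j. c j + d j \<in> S" using calculation subfield_basic(3)[OF S] by blast
    ultimately show ?thesis unfolding lsp_def by (intro CollectI exI[of _ "\<lambda>j. c j + d j"] conjI) auto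
  qed
  show "a \<in> S \<Longrightarrow> x \<in> lsp scale S vs \<Longrightarrow> scale a x \<in> lsp scale S vs"
  proof -
    assume "a \<in> S" "x \<in> lsp scale S vs"
    then obtain c where "\<forall>j. c j \<in> S" "x = (\<Sum>j<length vs. scale (c j) (vs!j))"
      unfolding lsp_def by blast
    moreover have "scale a x = (\<Sum>j<length vs. scale (a * c j) (vs!j))"
      using calculation by (simp add: scale_sum_right)
    moreover have "\<forall>j. a * c j \<in> S" using calculation \<open>a \<in> S\<close> subfield_basic(4)[OF S] by blast
    ultimately show ?thesis unfolding lsp_def by (intro CollectI exI[of _ "\<lambda>j. a * c j"] conjI) auto
  qed
  show "v \<in> set vs \<Longrightarrow> v \<in> lsp scale S vs"
  proof -
    assume "v \<in> set vs"
    then obtain k where k: "k < length vs" "vs ! k = v" by (auto simp: in_set_conv_nth)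
    have "(\<Sum>j<length vs. scale (if j = k then 1 else 0) (vs!j)) = (\<Sum>j<length vs. (if j = k then v else 0))"
      using k by (intro sum.cong) auto
    also have "\<dots> = v" using k by simp
    finally have "(\<Sum>j<length vs. scale (if j = k then 1 else 0) (vs!j)) = v" .
    moreover have "\<forall>j. (if j = k then 1 else 0) \<in> S" using subfield_basic(1,2)[OF S] by simp
    ultimately show ?thesis unfolding lsp_def by (intro CollectI exI conjI) auto
  qed
qed

lemma lsp_neg: "is_subfield S \<Longrightarrow> x \<in> lsp scale S vs \<Longrightarrow> - x \<in> lsp scale S vs"
  using lsp_closed(3)[of S "-1" x vs] subfield_basic(2,5)[of S] by simp

lemma lsp_sum:
  assumes S: "is_subfield S" and f: "\<And>x. x \<in> A \<Longrightarrow> f x \<in> lsp scale S vs"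
  shows "sum f A \<in> lsp scale S vs"
proof (cases "finite A")
  case True
  then show ?thesis using f
  proof (induction A rule: finite_induct)
    case empty then show ?case using lsp_closed(1)[OF S] by simp
  next
    case (insert a A) then show ?case using lsp_closed(2)[OF S] by simp
  qed
next
  case False
  then show ?thesis using lsp_closed(1)[OF S] by simp
qed

lemma lsp_least:
  assumes S: "is_subfield S" and V: "0 \<in> V" "\<And>x y. x \<in> V \<Longrightarrow> y \<in> V \<Longrightarrow> x + y \<in> V"
    "\<And>a x. a \<in> S \<Longrightarrow> x \<in> V \<Longrightarrow> scale a x \<in> V" and sub: "set vs \<subseteq> V"
  shows "lsp scale S vs \<subseteq> V"
proof
  fix x assume "x \<in> lsp scale S vs"
  then obtain c where c: "\<forall>j. c j \<in> S" "x = (\<Sum>j<length vs. scale (c j) (vs!j))"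
    unfolding lsp_def by blast
  have "(\<Sum>j<k. scale (c j) (vs!j)) \<in> V" if "k \<le> length vs" for k
    using that
  proof (induction k)
    case 0 then show ?case using V by simp
  next
    case (Suc k)
    then have "vs ! k \<in> V" using sub by auto
    then show ?case using Suc c(1) V by simp
  qed
  then show "x \<in> V" using c by simp
qed

lemma lsp_Cons_mem: assumes S: "is_subfield S" and v: "v \<in> lsp scale S vs"
  shows "lsp scale S (v#vs) = lsp scale S vs"
proof
  show "lsp scale S (v#vs) \<subseteq> lsp scale S vs"
  proof
    fix x assume "x \<in> lsp scale S (v#vs)"
    then obtain a w where "x = scale a v + w" "a \<in> S" "w \<in> lsp scale S vs"
      unfolding lsp_Cons by blast
    then show "x \<in> lsp scale S vs" using lsp_closed(2,3)[OF S] v by simp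
  qed
  show "lsp scale S vs \<subseteq> lsp scale S (v#vs)"
  proof
    fix w assume "w \<in> lsp scale S vs"
    then have "w = scale 0 v + w \<and> 0 \<in> S \<and> w \<in> lsp scale S vs" using subfield_basic(1)[OF S] by simp
    then show "w \<in> lsp scale S (v#vs)" unfolding lsp_Cons by blast
  qed
qed

lemma lsp_Cons_eq: "lsp scale S vs = lsp scale S ws \<Longrightarrow> lsp scale S (v#vs) = lsp scale S (v#ws)"
  unfolding lsp_Cons by simp

lemma card_lsp_Cons:
  assumes S: "is_subfield S" and fin: "finite (UNIV :: 'b set)" and finS: "finite S" and v: "v \<notin> lsp scale S vs"
  shows "card (lsp scale S (v#vs)) = card S * card (lsp scale S vs)"
proof -
  define g where "g p = scale (fst p) v + snd p" for p
  have eq: "lsp scale S (v#vs) = g ` (S \<times> lsp scale S vs)"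
  proof (intro set_eqI iffI)
    fix x assume "x \<in> lsp scale S (v#vs)"
    then obtain a w where "x = scale a v + w" "a \<in> S" "w \<in> lsp scale S vs"
      unfolding lsp_Cons by blast
    then have "x = g (a, w) \<and> (a, w) \<in> S \<times> lsp scale S vs" by (simp add: g_def)
    then show "x \<in> g ` (S \<times> lsp scale S vs)" by blast
  next
    fix x assume "x \<in> g ` (S \<times> lsp scale S vs)"
    then obtain a w where "x = scale a v + w" "a \<in> S" "w \<in> lsp scale S vs"
      by (auto simp: g_def)
    then show "x \<in> lsp scale S (v#vs)" unfolding lsp_Cons by blast
  qed
  have "inj_on g (S \<times> lsp scale S vs)"
  proof (rule inj_onI)
    fix p p' assume p: "p \<in> S \<times> lsp scale S vs" "p' \<in> S \<times> lsp scale S vs" and e0: "g p = g p'"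
    obtain a w a' w' where pp: "p = (a, w)" "p' = (a', w')" by fastforce
    have a: "a \<in> S" "w \<in> lsp scale S vs" "a' \<in> S" "w' \<in> lsp scale S vs" using p pp by auto
    have e: "scale a v + w = scale a' v + w'" using e0 pp by (simp add: g_def)
    show "p = p'"
    proof (cases "a = a'")
      case True then show ?thesis using e pp by simp
    next
      case False
      have "scale (a - a') v = w' + - w" using e by (simp add: algebra_simps)
      then have "scale (inverse (a - a')) (scale (a - a') v) = scale (inverse (a - a')) (w' + - w)" by simp
      then have "v = scale (inverse (a - a')) (w' + - w)" using False by simp
      moreover have "w' + - w \<in> lsp scale S vs"
        using a lsp_closed(2)[OF S] lsp_neg[OF S] by blast
      moreover have "inverse (a - a') \<in> S" using a subfield_basic(6,7)[OF S] by blast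
      ultimately have "v \<in> lsp scale S vs" using lsp_closed(3)[OF S] by simp
      then show ?thesis using v by simp
    qed
  qed
  moreover have "finite (lsp scale S vs)" using fin by (rule finite_subset[rotated]) simp
  ultimately show ?thesis unfolding eq using finS by (simp add: card_image card_cartesian_product)
qed

lemma card_lsp_le:
  assumes S: "is_subfield S" and fin: "finite (UNIV :: 'b set)" and finS: "finite S"
  shows "card (lsp scale S vs) \<le> card S ^ length vs"
proof (induction vs)
  case Nil then show ?case using lsp_Nil[OF S] by simp
next
  case (Cons v vs)
  have cS: "1 \<le> card S" using finS subfield_basic(1)[OF S] by (metis card_0_eq empty_iff less_one not_le)
  show ?case
  proof (cases "v \<in> lsp scale S vs")
    case True
    then have "card (lsp scale S (v#vs)) = card (lsp scale S vs)" using lsp_Cons_mem[OF S] by simp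
    also have "\<dots> \<le> card S ^ length vs" by (rule Cons)
    also have "\<dots> \<le> card S ^ length (v#vs)" using cS by (simp add: power_increasing)
    finally show ?thesis .
  next
    case False
    then have "card (lsp scale S (v#vs)) = card S * card (lsp scale S vs)" using card_lsp_Cons[OF S fin finS] by simp
    also have "\<dots> \<le> card S * card S ^ length vs" using Cons by simp
    finally show ?thesis by simp
  qed
qed

lemma lsp_prune:
  assumes S: "is_subfield S" and fin: "finite (UNIV :: 'b set)" and finS: "finite S"
  shows "\<exists>ws. set ws \<subseteq> set vs \<and> distinct ws \<and> lsp scale S ws = lsp scale S vs \<and> card (lsp scale S ws) = card S ^ length ws"
proof (induction vs)
  case Nil then show ?case using lsp_Nil[OF S] by (intro exI[of _ "[]"]) simp
next
  case (Cons v vs)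
  then obtain ws where ws: "set ws \<subseteq> set vs" "distinct ws" "lsp scale S ws = lsp scale S vs" "card (lsp scale S ws) = card S ^ length ws"
    by blast
  show ?case
  proof (cases "v \<in> lsp scale S vs")
    case True
    then show ?thesis using ws lsp_Cons_mem[OF S True] by (intro exI[of _ ws]) auto
  next
    case False
    have "v \<notin> set ws" using False ws(3) lsp_closed(4)[OF S, of v ws] by auto
    moreover have "card (lsp scale S (v#ws)) = card S ^ length (v#ws)"
      using card_lsp_Cons[OF S fin finS, of v ws] False ws by simp
    moreover have "lsp scale S (v#ws) = lsp scale S (v#vs)" using ws(3) by (rule lsp_Cons_eq)
    ultimately show ?thesis using ws by (intro exI[of _ "v#ws"]) auto
  qed
qed

lemma lsp_alt:
  assumes S: "is_subfield S"
  shows "lsp scale S vs = (\<lambda>c. \<Sum>j<length vs. scale (c j) (vs!j)) ` (PiE {..<length vs} (\<lambda>_. S))"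
proof (intro set_eqI iffI)
  fix x assume "x \<in> lsp scale S vs"
  then obtain c where c: "\<forall>j. c j \<in> S" "x = (\<Sum>j<length vs. scale (c j) (vs!j))"
    unfolding lsp_def by blast
  have "restrict c {..<length vs} \<in> PiE {..<length vs} (\<lambda>_. S)" using c by auto
  moreover have "x = (\<Sum>j<length vs. scale (restrict c {..<length vs} j) (vs!j))"
    using c by simp
  ultimately show "x \<in> (\<lambda>c. \<Sum>j<length vs. scale (c j) (vs!j)) ` (PiE {..<length vs} (\<lambda>_. S))"
    by blast
next
  fix x assume "x \<in> (\<lambda>c. \<Sum>j<length vs. scale (c j) (vs!j)) ` (PiE {..<length vs} (\<lambda>_. S))"
  then obtain c where c: "c \<in> PiE {..<length vs} (\<lambda>_. S)" "x = (\<Sum>j<length vs. scale (c j) (vs!j))"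
    by blast
  define d where "d j = (if j < length vs then c j else 0)" for j
  have "\<forall>j. d j \<in> S" using c(1) subfield_basic(1)[OF S] by (auto simp: d_def)
  moreover have "x = (\<Sum>j<length vs. scale (d j) (vs!j))" using c(2) by (simp add: d_def)
  ultimately show "x \<in> lsp scale S vs" unfolding lsp_def by blast
qed

lemma lsp_inj:
  assumes S: "is_subfield S" and fin: "finite (UNIV :: 'b set)" and finS: "finite S"
    and ind: "card (lsp scale S vs) = card S ^ length vs"
  shows "inj_on (\<lambda>c. \<Sum>j<length vs. scale (c j) (vs!j)) (PiE {..<length vs} (\<lambda>_. S))"
proof (rule eq_card_imp_inj_on)
  show "finite (PiE {..<length vs} (\<lambda>_. S))" using finS by (simp add: finite_PiE)
  show "card ((\<lambda>c. \<Sum>j<length vs. scale (c j) (vs!j)) ` (PiE {..<length vs} (\<lambda>_. S))) = card (PiE {..<length vs} (\<lambda>_. S))"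
    using ind lsp_alt[OF S, of vs] by (simp add: card_PiE)
qed

end

(* ---- part C ---- *)
definition Vn :: "'a::field set \<Rightarrow> ('a ^ 'n) set" where "Vn S = {u. \<forall>i. u$i \<in> S}"
definition dotp :: "'a::field ^ 'n \<Rightarrow> 'a ^ 'n \<Rightarrow> 'a" where "dotp u v = (\<Sum>i\<in>UNIV. u$i * v$i)"
definition ssub :: "'a::field set \<Rightarrow> ('a ^ 'n) set \<Rightarrow> bool" where
  "ssub S U \<longleftrightarrow> U \<subseteq> Vn S \<and> 0 \<in> U \<and> (\<forall>x\<in>U. \<forall>y\<in>U. x + y \<in> U) \<and> (\<forall>c\<in>S. \<forall>x\<in>U. c *s x \<in> U)"
definition perp :: "'a::field set \<Rightarrow> ('a ^ 'n) set \<Rightarrow> ('a ^ 'n) set" where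
  "perp S U = {u \<in> Vn S. \<forall>v\<in>U. dotp u v = 0}"

lemma dotp_comm: "dotp u v = dotp v u" by (simp add: dotp_def mult.commute)
lemma dotp_add_left: "dotp (x + y) v = dotp x v + dotp y v" by (simp add: dotp_def algebra_simps sum.distrib)
lemma dotp_add_right: "dotp v (x + y) = dotp v x + dotp v y" by (simp add: dotp_def algebra_simps sum.distrib)
lemma dotp_scale_left: "dotp (c *s x) v = c * dotp x v" by (simp add: dotp_def sum_distrib_left algebra_simps)
lemma dotp_scale_right: "dotp v (c *s x) = c * dotp v x" by (simp add: dotp_def sum_distrib_left algebra_simps)
lemma dotp_zero_left[simp]: "dotp 0 v = 0" by (simp add: dotp_def)
lemma dotp_zero_right[simp]: "dotp v 0 = 0" by (simp add: dotp_def)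
lemma dotp_axis: "dotp (axis i 1) v = v $ i"
proof -
  have "dotp (axis i 1) v = (\<Sum>j\<in>UNIV. if j = i then v$i else 0)"
    unfolding dotp_def by (rule sum.cong) (auto simp: axis_def)
  then show ?thesis by simp
qed

lemma dotp_in: "is_subfield S \<Longrightarrow> u \<in> Vn S \<Longrightarrow> v \<in> Vn S \<Longrightarrow> dotp u v \<in> S"
  unfolding dotp_def Vn_def by (rule subfield_sum) (auto intro: subfield_basic)

lemma Vn_UNIV[simp]: "Vn UNIV = UNIV" by (simp add: Vn_def)

lemma Vn_closed:
  assumes S: "is_subfield S"
  shows "0 \<in> Vn S" "x \<in> Vn S \<Longrightarrow> y \<in> Vn S \<Longrightarrow> x + y \<in> Vn S" "c \<in> S \<Longrightarrow> x \<in> Vn S \<Longrightarrow> c *s x \<in> Vn S"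
    "axis i 1 \<in> Vn S"
  using subfield_basic[OF S] by (auto simp: Vn_def axis_def)

lemma ssub_Vn: "is_subfield S \<Longrightarrow> ssub S (Vn S)"
  unfolding ssub_def using Vn_closed by blast

lemma ssub_neg: "is_subfield S \<Longrightarrow> ssub S U \<Longrightarrow> x \<in> U \<Longrightarrow> - x \<in> U"
  unfolding ssub_def using subfield_basic(2,5)[of S] by (metis vector_sneg_minus1)

lemma ssub_diff: "is_subfield S \<Longrightarrow> ssub S U \<Longrightarrow> x \<in> U \<Longrightarrow> y \<in> U \<Longrightarrow> x - y \<in> U"
  using ssub_neg[of S U y] unfolding ssub_def by (metis diff_conv_add_uminus)

lemma ssub_perp: assumes S: "is_subfield S" shows "ssub S (perp S U)"
  unfolding ssub_def perp_def
  using Vn_closed[OF S] by (auto simp: dotp_add_left dotp_scale_left)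

lemma perp_subset: "perp S U \<subseteq> Vn S" by (auto simp: perp_def)

lemma card_Vn: "card (Vn S :: ('a::field ^ 'n) set) = card S ^ CARD('n)"
proof -
  have "bij_betw vec_nth (Vn S :: ('a ^ 'n) set) (PiE UNIV (\<lambda>_. S))"
  proof (rule bij_betwI[where g = vec_lambda])
    show "vec_nth \<in> Vn S \<rightarrow> PiE UNIV (\<lambda>_. S)" by (auto simp: Vn_def)
    show "vec_lambda \<in> PiE UNIV (\<lambda>_. S) \<rightarrow> Vn S" by (auto simp: Vn_def)
  qed auto
  then have "card (Vn S :: ('a ^ 'n) set) = card (PiE (UNIV::'n set) (\<lambda>_. S))"
    by (rule bij_betw_same_card)
  also have "\<dots> = card S ^ CARD('n)" by (simp add: card_PiE)
  finally show ?thesis .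
qed

lemma fiber_count:
  assumes fin: "finite A" and img: "g ` A \<subseteq> B" and fb: "\<And>b. b \<in> B \<Longrightarrow> card {a\<in>A. g a = b} = k"
    and finB: "finite B"
  shows "card A = card B * k"
proof -
  have "A = (\<Union>b\<in>B. {a\<in>A. g a = b})" using img by auto
  then have "card A = card (\<Union>b\<in>B. {a\<in>A. g a = b})" by simp
  also have "\<dots> = (\<Sum>b\<in>B. card {a\<in>A. g a = b})"
    by (rule card_UN_disjoint) (use fin finB in auto)
  also have "\<dots> = card B * k" using fb by simp
  finally show ?thesis .
qed

lemma additive_count:
  fixes V :: "('a::{field,finite} ^ 'n) set" and f :: "'a ^ 'n \<Rightarrow> 'b::ab_group_add"
  assumes S: "is_subfield S" and V: "ssub S V"
    and add: "\<And>x y. x \<in> V \<Longrightarrow> y \<in> V \<Longrightarrow> f (x + y) = f x + f y"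
    and fin: "finite (f ` V)"
  shows "card V = card (f ` V) * card {v\<in>V. f v = 0}"
proof (rule fiber_count[where g = f])
  show "finite V" by simp
  show "f ` V \<subseteq> f ` V" by simp
  show "finite (f ` V)" by (rule fin)
  fix b assume "b \<in> f ` V"
  then obtain x0 where x0: "x0 \<in> V" "f x0 = b" by blast
  have "bij_betw (\<lambda>w. x0 + w) {v\<in>V. f v = 0} {a\<in>V. f a = b}"
  proof (rule bij_betwI[where g = "\<lambda>v. v - x0"])
    show "(\<lambda>w. x0 + w) \<in> {v\<in>V. f v = 0} \<rightarrow> {a\<in>V. f a = b}"
      using x0 add V unfolding ssub_def by auto
    show "(\<lambda>v. v - x0) \<in> {a\<in>V. f a = b} \<rightarrow> {v\<in>V. f v = 0}"
    proof
      fix v assume v: "v \<in> {a\<in>V. f a = b}"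
      then have d: "v - x0 \<in> V" using ssub_diff[OF S V] x0 by auto
      have "f v = f (x0 + (v - x0))" by simp
      also have "\<dots> = f x0 + f (v - x0)" using add x0 d by blast
      finally show "v - x0 \<in> {v\<in>V. f v = 0}" using v x0 d by simp
    qed
  qed auto
  then have "card {v\<in>V. f v = 0} = card {a\<in>V. f a = b}" by (rule bij_betw_same_card)
  then show "card {a\<in>V. f a = b} = card {v\<in>V. f v = 0}" by simp
qed

lemma functional_count:
  fixes V :: "('a::{field,finite} ^ 'n) set" and f :: "'a ^ 'n \<Rightarrow> 'a"
  assumes S: "is_subfield S" and V: "ssub S V"
    and add: "\<And>x y. x \<in> V \<Longrightarrow> y \<in> V \<Longrightarrow> f (x + y) = f x + f y"
    and sc: "\<And>c x. c \<in> S \<Longrightarrow> x \<in> V \<Longrightarrow> f (c *s x) = c * f x"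
    and inS: "\<And>x. x \<in> V \<Longrightarrow> f x \<in> S"
    and v0: "v0 \<in> V" "f v0 \<noteq> 0"
  shows "card V = card S * card {v\<in>V. f v = 0}"
proof -
  have "f ` V = S"
  proof
    show "f ` V \<subseteq> S" using inS by auto
    show "S \<subseteq> f ` V"
    proof
      fix c assume c: "c \<in> S"
      have t: "c / f v0 \<in> S" using subfield_basic(8)[OF S c inS[OF v0(1)]] .
      then have "(c / f v0) *s v0 \<in> V" using V v0 unfolding ssub_def by blast
      moreover have "f ((c / f v0) *s v0) = c" using sc[OF t v0(1)] v0(2) by simp
      ultimately show "c \<in> f ` V" by (metis image_eqI)
    qed
  qed
  then show ?thesis using additive_count[OF S V add] by simp
qed

(* ---- part C2 ---- *)
lemma card_filter_sum: "finite A \<Longrightarrow> card {x\<in>A. P x} = (\<Sum>x\<in>A. if P x then 1 else 0)"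
  by (simp add: sum.If_cases Collect_conj_eq Int_commute)

lemma perp_card:
  fixes V :: "('a::{field,finite} ^ 'n) set"
  assumes S: "is_subfield S" and V: "ssub S V"
  shows "card V * card (perp S V) = card S ^ CARD('n)"
proof -
  define N where "N = card (Vn S :: ('a^'n) set)"
  define c where "c = card V"
  define p where "p = card (perp S V)"
  define s where "s = card S"
  have VS: "V \<subseteq> Vn S" using V by (simp add: ssub_def)
  have s2: "2 \<le> s"
  proof -
    have "{0, 1} \<subseteq> S" using subfield_basic(1,2)[OF S] by simp
    then have "card {0::'a, 1} \<le> card S" by (rule card_mono[rotated]) simp
    then show ?thesis by (simp add: s_def)
  qed
  have swap: "(\<Sum>u\<in>Vn S. card {v\<in>V. dotp u v = 0}) = (\<Sum>v\<in>V. card {u\<in>Vn S. dotp u v = 0})"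
    by (simp add: card_filter_sum sum.swap[of _ "Vn S" V])
  have a: "s * card {u\<in>Vn S. dotp u v = 0} = (if v = 0 then s * N else N)" if v: "v \<in> V" for v
  proof (cases "v = 0")
    case True then show ?thesis by (simp add: N_def)
  next
    case False
    then obtain i where i: "v $ i \<noteq> 0" by (metis vec_eq_iff zero_index)
    have "card (Vn S :: ('a^'n) set) = card S * card {u\<in>Vn S. dotp u v = 0}"
    proof (rule functional_count[OF S ssub_Vn[OF S]])
      show "axis i 1 \<in> Vn S" by (rule Vn_closed(4)[OF S])
      show "dotp (axis i 1) v \<noteq> 0" using i by (simp add: dotp_axis)
    qed (use v VS in \<open>auto simp: dotp_add_left dotp_scale_left intro: dotp_in[OF S]\<close>)
    then show ?thesis using False by (simp add: N_def s_def)
  qed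
  have b: "s * card {v\<in>V. dotp u v = 0} = (if u \<in> perp S V then s * c else c)" if u: "u \<in> Vn S" for u
  proof (cases "u \<in> perp S V")
    case True
    then have "{v\<in>V. dotp u v = 0} = V" by (auto simp: perp_def)
    then show ?thesis using True by (simp add: c_def)
  next
    case False
    then obtain v0 where v0: "v0 \<in> V" "dotp u v0 \<noteq> 0" using u by (auto simp: perp_def)
    have "card V = card S * card {v\<in>V. dotp u v = 0}"
      by (rule functional_count[where f="dotp u", OF S V _ _ _ v0])
         (use u VS in \<open>auto simp: dotp_add_right dotp_scale_right intro: dotp_in[OF S]\<close>)
    then show ?thesis using False by (simp add: c_def s_def)
  qed
  have L: "s * (\<Sum>v\<in>V. card {u\<in>Vn S. dotp u v = 0}) = s * N + (c - 1) * N"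
  proof -
    have "s * (\<Sum>v\<in>V. card {u\<in>Vn S. dotp u v = 0}) = (\<Sum>v\<in>V. if v = 0 then s * N else N)"
      by (simp add: sum_distrib_left a)
    also have "\<dots> = (if (0::'a^'n) = 0 then s * N else N) + (\<Sum>v\<in>V - {0}. if v = 0 then s * N else N)"
      using V by (intro sum.remove) (simp_all add: ssub_def)
    also have "(if (0::'a^'n) = 0 then s * N else N) = s * N" by simp
    also have "(\<Sum>v\<in>V - {0}. if v = 0 then s * N else N) = (\<Sum>v\<in>V - {0}. N)" by (rule sum.cong) auto
    also have "\<dots> = (c - 1) * N" using V by (simp add: ssub_def c_def)
    finally show ?thesis .
  qed
  have R: "s * (\<Sum>u\<in>Vn S. card {v\<in>V. dotp u v = 0}) = p * (s * c) + (N - p) * c"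
  proof -
    have "s * (\<Sum>u\<in>Vn S. card {v\<in>V. dotp u v = 0}) = (\<Sum>u\<in>Vn S. if u \<in> perp S V then s * c else c)"
      by (simp add: sum_distrib_left b)
    also have "\<dots> = (\<Sum>u\<in>Vn S - perp S V. if u \<in> perp S V then s * c else c) + (\<Sum>u\<in>perp S V. if u \<in> perp S V then s * c else c)"
      by (rule sum.subset_diff) (simp_all add: perp_subset)
    also have "(\<Sum>u\<in>Vn S - perp S V. if u \<in> perp S V then s * c else c) = (\<Sum>u\<in>Vn S - perp S V. c)"
      by (rule sum.cong) auto
    also have "(\<Sum>u\<in>perp S V. if u \<in> perp S V then s * c else c) = (\<Sum>u\<in>perp S V. s * c)"
      by (rule sum.cong) auto
    also have "card (Vn S - perp S V) = N - p"
      using perp_subset[of S V] by (simp add: N_def p_def card_Diff_subset)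
    ultimately show ?thesis by (simp add: p_def)
  qed
  have pN: "p \<le> N" unfolding p_def N_def by (rule card_mono) (simp_all add: perp_subset)
  have c1: "1 \<le> c" using V by (auto simp: c_def ssub_def card_gt_0_iff Suc_le_eq)
  have E: "s * N + (c - 1) * N = p * (s * c) + (N - p) * c" using L R swap by simp
  then have "int (s * N + (c - 1) * N) = int (p * (s * c) + (N - p) * c)" by simp
  then have "int s * int N + (int c - 1) * int N = int p * (int s * int c) + (int N - int p) * int c"
    using c1 pN by (simp add: of_nat_diff)
  then have "(int s - 1) * (int N - int p * int c) = 0" by (simp add: algebra_simps)
  then have "int N = int p * int c" using s2 by simp
  then have "N = p * c" by (metis of_nat_eq_iff of_nat_mult)
  then show ?thesis by (simp add: N_def p_def c_def card_Vn mult.commute)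
qed

lemma perp_perp:
  fixes V :: "('a::{field,finite} ^ 'n) set"
  assumes S: "is_subfield S" and V: "ssub S V"
  shows "perp S (perp S V) = V"
proof -
  have sub: "V \<subseteq> perp S (perp S V)"
    using V by (auto simp: perp_def ssub_def dotp_comm)
  have "card V * card (perp S V) = card (perp S V) * card (perp S (perp S V))"
    using perp_card[OF S V] perp_card[OF S ssub_perp[OF S, of V]] by simp
  moreover have "card (perp S V) > 0"
    using ssub_perp[OF S, of V] by (auto simp: ssub_def card_gt_0_iff)
  ultimately have "card V = card (perp S (perp S V))"
    by (metis mult.commute mult_right_cancel not_less0 zero_less_iff_neq_zero)
  then show ?thesis using sub by (intro card_subset_eq[symmetric]) simp_all
qed

definition ssum :: "('a::field ^ 'n) set \<Rightarrow> ('a ^ 'n) set \<Rightarrow> ('a ^ 'n) set" where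
  "ssum A B = {a + b | a b. a \<in> A \<and> b \<in> B}"

lemma card_sum_int:
  fixes A B :: "('a::{field,finite} ^ 'n) set"
  assumes S: "is_subfield S" and A: "ssub S A" and B: "ssub S B"
  shows "card (ssum A B) * card (A \<inter> B) = card A * card B"
proof -
  have "card (A \<times> B) = card (ssum A B) * card (A \<inter> B)"
  proof (rule fiber_count[where g = "\<lambda>p. fst p + snd p"])
    show "finite (A \<times> B)" by simp
    show "(\<lambda>p. fst p + snd p) ` (A \<times> B) \<subseteq> ssum A B" unfolding ssum_def by force
    show "finite (ssum A B)" by simp
    fix x assume "x \<in> ssum A B"
    then obtain a0 b0 where ab: "a0 \<in> A" "b0 \<in> B" "x = a0 + b0" by (auto simp: ssum_def)
    have "bij_betw (\<lambda>z. (a0 + z, b0 - z)) (A \<inter> B) {p \<in> A \<times> B. fst p + snd p = x}"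
    proof (rule bij_betwI[where g = "\<lambda>p. fst p - a0"])
      show "(\<lambda>z. (a0 + z, b0 - z)) \<in> A \<inter> B \<rightarrow> {p \<in> A \<times> B. fst p + snd p = x}"
        using ab A B ssub_diff[OF S B] unfolding ssub_def by auto
      show "(\<lambda>p. fst p - a0) \<in> {p \<in> A \<times> B. fst p + snd p = x} \<rightarrow> A \<inter> B"
      proof
        fix p assume p: "p \<in> {p \<in> A \<times> B. fst p + snd p = x}"
        then have "fst p - a0 \<in> A" using ssub_diff[OF S A] ab by auto
        moreover have "fst p - a0 = b0 - snd p" using p ab by (auto simp: algebra_simps)
        moreover have "b0 - snd p \<in> B" using ssub_diff[OF S B] ab p by auto
        ultimately show "fst p - a0 \<in> A \<inter> B" by simp
      qed
      show "\<And>z. z \<in> A \<inter> B \<Longrightarrow> fst (a0 + z, b0 - z) - a0 = z" by simp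
      show "\<And>p. p \<in> {p \<in> A \<times> B. fst p + snd p = x} \<Longrightarrow> (a0 + (fst p - a0), b0 - (fst p - a0)) = p"
        using ab by (auto simp: algebra_simps prod_eq_iff)
    qed
    then have "card (A \<inter> B) = card {p \<in> A \<times> B. fst p + snd p = x}" by (rule bij_betw_same_card)
    then show "card {p \<in> A \<times> B. fst p + snd p = x} = card (A \<inter> B)" by simp
  qed
  then show ?thesis by (simp add: card_cartesian_product)
qed

lemma ssub_ssum: assumes S: "is_subfield S" and "ssub S A" "ssub S B" shows "ssub S (ssum A B)"
proof -
  have A: "A \<subseteq> Vn S" "0 \<in> A" "\<And>x y. x\<in>A \<Longrightarrow> y\<in>A \<Longrightarrow> x+y\<in>A" "\<And>c x. c\<in>S \<Longrightarrow> x\<in>A \<Longrightarrow> c *s x \<in> A"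
    using assms(2) unfolding ssub_def by auto
  have B: "B \<subseteq> Vn S" "0 \<in> B" "\<And>x y. x\<in>B \<Longrightarrow> y\<in>B \<Longrightarrow> x+y\<in>B" "\<And>c x. c\<in>S \<Longrightarrow> x\<in>B \<Longrightarrow> c *s x \<in> B"
    using assms(3) unfolding ssub_def by auto
  have mem: "a \<in> A \<Longrightarrow> b \<in> B \<Longrightarrow> a + b \<in> ssum A B" for a b unfolding ssum_def by blast
  have "0 \<in> ssum A B" using mem[OF A(2) B(2)] by simp
  moreover have "ssum A B \<subseteq> Vn S"
  proof
    fix x assume "x \<in> ssum A B"
    then obtain a b where "a \<in> A" "b \<in> B" "x = a + b" unfolding ssum_def by blast
    then show "x \<in> Vn S" using A(1) B(1) Vn_closed(2)[OF S] by blast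
  qed
  moreover have "\<forall>x\<in>ssum A B. \<forall>y\<in>ssum A B. x + y \<in> ssum A B"
  proof (intro ballI)
    fix x y assume "x \<in> ssum A B" "y \<in> ssum A B"
    then obtain a b a' b' where ab: "a \<in> A" "b \<in> B" "a' \<in> A" "b' \<in> B" "x = a + b" "y = a' + b'"
      unfolding ssum_def by blast
    then have "x + y = (a + a') + (b + b')" by (simp add: algebra_simps)
    then show "x + y \<in> ssum A B" using mem[OF A(3)[OF ab(1,3)] B(3)[OF ab(2,4)]] by simp
  qed
  moreover have "\<forall>c\<in>S. \<forall>x\<in>ssum A B. c *s x \<in> ssum A B"
  proof (intro ballI)
    fix c x assume c: "c \<in> S" and "x \<in> ssum A B"
    then obtain a b where ab: "a \<in> A" "b \<in> B" "x = a + b" unfolding ssum_def by blast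
    then have "c *s x = c *s a + c *s b" by (simp add: vector_add_ldistrib)
    then show "c *s x \<in> ssum A B" using mem[OF A(4)[OF c ab(1)] B(4)[OF c ab(2)]] by simp
  qed
  ultimately show ?thesis unfolding ssub_def by blast
qed

lemma ssub_inter: "ssub S A \<Longrightarrow> ssub S B \<Longrightarrow> ssub S (A \<inter> B)"
  unfolding ssub_def by blast

lemma key_K:
  fixes C W :: "('a::{field,finite} ^ 'n) set"
  assumes C: "ssub UNIV C" and W: "ssub UNIV W"
  shows "card (C \<inter> W) * card (perp UNIV W) = card C * card (perp UNIV C \<inter> perp UNIV W)"
proof -
  have U: "is_subfield (UNIV :: 'a set)" by (rule subfield_UNIV)
  define X where "X = ssum (perp UNIV C) (perp UNIV W)"
  have X: "ssub UNIV X" unfolding X_def by (intro ssub_ssum U ssub_perp)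
  have pX: "perp UNIV X = C \<inter> W"
  proof
    show "perp UNIV X \<subseteq> C \<inter> W"
    proof
      fix x assume x: "x \<in> perp UNIV X"
      have "x \<in> perp UNIV (perp UNIV C)"
      proof -
        have "\<forall>a\<in>perp UNIV C. dotp x a = 0"
        proof
          fix a assume "a \<in> perp UNIV C"
          moreover have "0 \<in> perp UNIV W" by (simp add: perp_def)
          ultimately have "a + 0 \<in> X" unfolding X_def ssum_def by blast
          then show "dotp x a = 0" using x by (auto simp: perp_def)
        qed
        then show ?thesis by (simp add: perp_def)
      qed
      moreover have "x \<in> perp UNIV (perp UNIV W)"
      proof -
        have "\<forall>a\<in>perp UNIV W. dotp x a = 0"
        proof
          fix a assume "a \<in> perp UNIV W"
          moreover have "0 \<in> perp UNIV C" by (simp add: perp_def)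
          ultimately have "0 + a \<in> X" unfolding X_def ssum_def by blast
          then show "dotp x a = 0" using x by (auto simp: perp_def)
        qed
        then show ?thesis by (simp add: perp_def)
      qed
      ultimately show "x \<in> C \<inter> W" using perp_perp[OF U C] perp_perp[OF U W] by simp
    qed
    show "C \<inter> W \<subseteq> perp UNIV X"
    proof
      fix x assume x: "x \<in> C \<inter> W"
      have "dotp x y = 0" if y: "y \<in> X" for y
      proof -
        obtain a b where "a \<in> perp UNIV C" "b \<in> perp UNIV W" "y = a + b"
          using y unfolding X_def ssum_def by blast
        then have "dotp a x = 0" "dotp b x = 0" "y = a + b" using x by (auto simp: perp_def)
        then show ?thesis by (simp add: dotp_add_right dotp_comm[of x a] dotp_comm[of x b])
      qed
      then show "x \<in> perp UNIV X" by (simp add: perp_def)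
    qed
  qed
  have pCW: "perp UNIV (C \<inter> W) = X" using perp_perp[OF U X] pX by simp
  have e1: "card (C \<inter> W) * card X = CARD('a) ^ CARD('n)"
    using perp_card[OF U ssub_inter[OF C W]] pCW by simp
  have e2: "card X * card (perp UNIV C \<inter> perp UNIV W) = card (perp UNIV C) * card (perp UNIV W)"
    unfolding X_def by (rule card_sum_int[OF U ssub_perp[OF U] ssub_perp[OF U]])
  have e3: "card C * card (perp UNIV C) = CARD('a) ^ CARD('n)" using perp_card[OF U C] by simp
  define a where "a = card (C \<inter> W)"
  define b where "b = card X"
  define c where "c = card C"
  define d where "d = card (perp UNIV C \<inter> perp UNIV W)"
  define e where "e = card (perp UNIV C)"
  define f where "f = card (perp UNIV W)"
  have "(a * f) * (b * e) = (c * d) * (b * e)"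
  proof -
    have "(a * f) * (b * e) = (a * b) * (e * f)" by (simp add: algebra_simps)
    also have "\<dots> = (c * e) * (b * d)" using e1 e2 e3 by (simp add: a_def b_def c_def d_def e_def f_def)
    finally show ?thesis by (simp add: algebra_simps)
  qed
  moreover have "b > 0" using X by (auto simp: b_def ssub_def card_gt_0_iff)
  moreover have "e > 0" using ssub_perp[OF U, of C] by (auto simp: e_def ssub_def card_gt_0_iff)
  ultimately have "a * f = c * d" by simp
  then show ?thesis by (simp add: a_def c_def d_def f_def)
qed

(* ---- part D ---- *)
locale gsetup =
  fixes F :: "'a::{field,finite} set" and q m :: nat
  assumes subF: "is_subfield F" and cardF: "card F = q" and cardK: "CARD('a) = q ^ m"
begin

lemma q2: "2 \<le> q"
proof -
  have "{0, 1} \<subseteq> F" using subfield_basic(1,2)[OF subF] by simp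
  then have "card {0::'a, 1} \<le> card F" by (rule card_mono[rotated]) simp
  then show ?thesis by (simp add: cardF)
qed

lemma basis_exists:
  "\<exists>e::'a list. length e = m \<and> lsp (*) F e = UNIV \<and> card (lsp (*) F e) = q ^ m"
proof -
  obtain vs :: "'a list" where vs: "set vs = UNIV" using finite_list[of "UNIV :: 'a set"] by auto
  obtain ws where ws: "set ws \<subseteq> set vs" "distinct ws" "lsp (*) F ws = lsp (*) F vs"
      "card (lsp (*) F ws) = card F ^ length ws"
    using vector_space_over_itself.lsp_prune[OF subF, of vs] by auto
  have "set vs \<subseteq> lsp (*) F vs" using vector_space_over_itself.lsp_closed(4)[OF subF] by blast
  then have U: "lsp (*) F ws = UNIV" using ws(3) vs by auto
  then have "q ^ length ws = q ^ m" using ws(4) cardK cardF by simp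
  then have "length ws = m" using q2 by (simp add: power_inject_exp)
  then show ?thesis using U ws(4) cardF by (intro exI[of _ ws]) simp
qed


definition ebas :: "'a list" where
  "ebas = (SOME e. length e = m \<and> lsp (*) F e = UNIV \<and> card (lsp (*) F e) = q ^ m)"

lemma ebas: "length ebas = m" "lsp (*) F ebas = UNIV" "card (lsp (*) F ebas) = q ^ m"
  using someI_ex[OF basis_exists] unfolding ebas_def by auto

definition EE :: "(nat \<Rightarrow> 'a) \<Rightarrow> 'a" where
  "EE c = (\<Sum>t<m. c t * ebas ! t)"

definition PF :: "(nat \<Rightarrow> 'a) set" where "PF = PiE {..<m} (\<lambda>_. F)"

lemma EE_bij: "bij_betw EE PF UNIV"
proof -
  have inj: "inj_on EE PF"
    using vector_space_over_itself.lsp_inj[OF subF _ _ , of ebas] ebas cardF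
    unfolding EE_def PF_def by simp
  have "EE ` PF = UNIV"
    using vector_space_over_itself.lsp_alt[OF subF, of ebas] ebas unfolding EE_def PF_def by simp
  then show ?thesis using inj by (simp add: bij_betw_def)
qed

definition co :: "'a \<Rightarrow> nat \<Rightarrow> 'a" where "co = the_inv_into PF EE"

lemma co_in: "co z \<in> PF"
  unfolding co_def using EE_bij the_inv_into_into[of EE PF z PF] by (auto simp: bij_betw_def)

lemma EE_co[simp]: "EE (co z) = z"
  unfolding co_def using EE_bij by (simp add: bij_betw_def f_the_inv_into_f)

lemma co_EE: "c \<in> PF \<Longrightarrow> co (EE c) = c"
  unfolding co_def using EE_bij by (simp add: bij_betw_def the_inv_into_f_f)

lemma co_F: "t < m \<Longrightarrow> co z t \<in> F"
  using co_in[of z] by (auto simp: PF_def)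

lemma co_ext: "\<not> t < m \<Longrightarrow> co z t = undefined"
  using co_in[of z] by (auto simp: PF_def PiE_def extensional_def)

lemma EE_zero: "c \<in> PF \<Longrightarrow> EE c = 0 \<Longrightarrow> \<forall>t<m. c t = 0"
proof -
  assume c: "c \<in> PF" "EE c = 0"
  have z: "(\<lambda>t\<in>{..<m}. 0) \<in> PF" using subfield_basic(1)[OF subF] by (auto simp: PF_def)
  have "EE (\<lambda>t\<in>{..<m}. 0) = 0" by (simp add: EE_def)
  then have "c = (\<lambda>t\<in>{..<m}. 0)" using c z EE_bij unfolding bij_betw_def inj_on_def by metis
  then show ?thesis by simp
qed

definition Dx :: "'a ^ 'n \<Rightarrow> nat \<Rightarrow> 'a ^ 'n" where
  "Dx x t = (\<chi> i. co (x$i) t)"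

lemma Dx_in: "t < m \<Longrightarrow> Dx x t \<in> Vn F"
  by (simp add: Dx_def Vn_def co_F)

lemma dotp_decomp:
  "dotp x l = EE (\<lambda>t\<in>{..<m}. dotp (Dx x t) l)"
proof -
  have "EE (\<lambda>t\<in>{..<m}. dotp (Dx x t) l) = (\<Sum>t<m. (\<Sum>i\<in>UNIV. co (x$i) t * l$i) * ebas ! t)"
    by (simp add: EE_def dotp_def Dx_def)
  also have "\<dots> = (\<Sum>t<m. \<Sum>i\<in>UNIV. co (x$i) t * l$i * ebas ! t)"
    by (simp add: sum_distrib_right)
  also have "\<dots> = (\<Sum>i\<in>UNIV. \<Sum>t<m. co (x$i) t * l$i * ebas ! t)"
    by (rule sum.swap)
  also have "\<dots> = (\<Sum>i\<in>UNIV. (\<Sum>t<m. co (x$i) t * ebas ! t) * l$i)"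
    by (rule sum.cong[OF refl]) (simp add: sum_distrib_right sum_distrib_left mult_ac)
  also have "\<dots> = (\<Sum>i\<in>UNIV. x$i * l$i)"
    using EE_co by (simp add: EE_def)
  finally show ?thesis by (simp add: dotp_def)
qed

lemma dotp_zero_iff:
  assumes "l \<in> Vn F"
  shows "dotp x l = 0 \<longleftrightarrow> (\<forall>t<m. dotp (Dx x t) l = 0)"
proof -
  have inPF: "(\<lambda>t\<in>{..<m}. dotp (Dx x t) l) \<in> PF"
    using dotp_in[OF subF Dx_in assms] by (auto simp: PF_def)
  show ?thesis
  proof
    assume "dotp x l = 0"
    then have "EE (\<lambda>t\<in>{..<m}. dotp (Dx x t) l) = 0" using dotp_decomp[of x l] by simp
    then show "\<forall>t<m. dotp (Dx x t) l = 0" using EE_zero[OF inPF] by simp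
  next
    assume "\<forall>t<m. dotp (Dx x t) l = 0"
    then have "(\<lambda>t\<in>{..<m}. dotp (Dx x t) l) = (\<lambda>t\<in>{..<m}. 0)" by auto
    then show "dotp x l = 0" by (simp add: dotp_decomp[of x l] EE_def)
  qed
qed

lemma descent:
  fixes U :: "('a ^ 'n) set"
  assumes U: "U \<subseteq> Vn F"
  shows "card (perp UNIV U) = card (perp F U) ^ m"
proof -
  define Phi where "Phi x = (\<lambda>t\<in>{..<m}. Dx x t)" for x :: "'a ^ 'n"
  define Psi where "Psi z = (\<chi> i. EE (\<lambda>t\<in>{..<m}. z t $ i))" for z :: "nat \<Rightarrow> 'a ^ 'n"
  have co_Psi: "co (Psi z $ i) = (\<lambda>t\<in>{..<m}. z t $ i)" if z: "z \<in> PiE {..<m} (\<lambda>_. perp F U)" for z i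
  proof -
    have "(\<lambda>t\<in>{..<m}. z t $ i) \<in> PF" using z by (auto simp: PF_def perp_def Vn_def)
    then show ?thesis by (simp add: Psi_def co_EE)
  qed
  have "bij_betw Phi (perp UNIV U) (PiE {..<m} (\<lambda>_. perp F U))"
  proof (rule bij_betwI[where g = Psi])
    show "Phi \<in> perp UNIV U \<rightarrow> PiE {..<m} (\<lambda>_. perp F U)"
    proof
      fix x assume x: "x \<in> perp UNIV U"
      have "Dx x t \<in> perp F U" if t: "t < m" for t
      proof -
        have "\<forall>v\<in>U. dotp (Dx x t) v = 0"
          using x dotp_zero_iff U t by (auto simp: perp_def)
        then show ?thesis using Dx_in[OF t] by (simp add: perp_def)
      qed
      then show "Phi x \<in> PiE {..<m} (\<lambda>_. perp F U)" by (simp add: Phi_def)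
    qed
    show "Psi \<in> PiE {..<m} (\<lambda>_. perp F U) \<rightarrow> perp UNIV U"
    proof
      fix z assume z: "z \<in> PiE {..<m} (\<lambda>_. perp F U)"
      have D: "Dx (Psi z) t = z t" if "t < m" for t
        using that co_Psi[OF z] by (simp add: Dx_def vec_eq_iff)
      have "dotp (Psi z) v = 0" if v: "v \<in> U" for v
      proof -
        have "\<forall>t<m. dotp (Dx (Psi z) t) v = 0" using D z v by (auto simp: perp_def)
        then show ?thesis using dotp_zero_iff U v by blast
      qed
      then show "Psi z \<in> perp UNIV U" by (simp add: perp_def)
    qed
    show "Psi (Phi x) = x" if "x \<in> perp UNIV U" for x
    proof -
      have "(\<lambda>t\<in>{..<m}. Phi x t $ i) = co (x $ i)" for i
        using co_ext by (auto simp: Phi_def Dx_def)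
      then show ?thesis by (simp add: Psi_def vec_eq_iff)
    qed
    show "Phi (Psi z) = z" if z: "z \<in> PiE {..<m} (\<lambda>_. perp F U)" for z
    proof -
      have "Dx (Psi z) t = z t" if "t < m" for t
        using that co_Psi[OF z] by (simp add: Dx_def vec_eq_iff)
      then show ?thesis using z unfolding Phi_def by (auto simp: PiE_def extensional_def)
    qed
  qed
  then have "card (perp UNIV U) = card (PiE {..<m} (\<lambda>_. perp F U))" by (rule bij_betw_same_card)
  also have "\<dots> = card (perp F U) ^ m" by (simp add: card_PiE)
  finally show ?thesis .
qed

end

(* ---- part D2 ---- *)
context gsetup
begin

lemma Fspan_lsp:
  assumes vs: "set vs = S"
  shows "Fspan F S = lsp (*) F vs"
proof
  show "Fspan F S \<subseteq> lsp (*) F vs"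
  proof
    fix x assume "x \<in> Fspan F S"
    then obtain T c where Tc: "finite T" "T \<subseteq> S" "\<forall>s. c s \<in> F" "x = (\<Sum>s\<in>T. c s * s)"
      unfolding Fspan_def by blast
    have "(\<Sum>s\<in>T. c s * s) \<in> lsp (*) F vs"
    proof (rule vector_space_over_itself.lsp_sum[OF subF])
      fix s assume "s \<in> T"
      then have "s \<in> lsp (*) F vs" using Tc vs vector_space_over_itself.lsp_closed(4)[OF subF] by blast
      then show "c s * s \<in> lsp (*) F vs" using Tc vector_space_over_itself.lsp_closed(3)[OF subF] by simp
    qed
    then show "x \<in> lsp (*) F vs" using Tc by simp
  qed
  show "lsp (*) F vs \<subseteq> Fspan F S"
  proof
    fix x assume "x \<in> lsp (*) F vs"
    then obtain c where c: "\<forall>j. c j \<in> F" "x = (\<Sum>j<length vs. c j * vs!j)"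
      unfolding lsp_def by blast
    define d where "d s = (\<Sum>j\<in>{j\<in>{..<length vs}. vs!j = s}. c j)" for s
    have "(\<Sum>s\<in>set vs. d s * s) = (\<Sum>s\<in>set vs. \<Sum>j\<in>{j\<in>{..<length vs}. vs!j = s}. c j * vs!j)"
      unfolding d_def sum_distrib_right by (rule sum.cong[OF refl], rule sum.cong[OF refl]) simp
    also have "\<dots> = (\<Sum>j<length vs. c j * vs!j)"
      by (rule sum.group) (simp_all add: image_subset_iff)
    finally have x: "x = (\<Sum>s\<in>set vs. d s * s)" using c by simp
    have dF: "\<forall>s. d s \<in> F"
    proof
      fix s show "d s \<in> F" unfolding d_def by (rule subfield_sum[OF subF]) (use c in simp)
    qed
    show "x \<in> Fspan F S" unfolding Fspan_def
      by (rule CollectI, rule exI[of _ "set vs"], rule exI[of _ d]) (use x vs dF in simp)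
  qed
qed

lemma rk_props:
  fixes x :: "'a ^ 'n"
  shows "q ^ rk F x = card (Fspan F (range (\<lambda>i. x$i)))" "rk F x \<le> CARD('n)"
proof -
  define S where "S = range (\<lambda>i. x$i)"
  obtain vs where vs: "set vs = S" "distinct vs" using finite_distinct_list[of S] by auto
  obtain ws where ws: "set ws \<subseteq> set vs" "distinct ws" "lsp (*) F ws = lsp (*) F vs"
      "card (lsp (*) F ws) = card F ^ length ws"
    using vector_space_over_itself.lsp_prune[OF subF, of vs] by auto
  have Sl: "S \<subseteq> lsp (*) F vs" using vs vector_space_over_itself.lsp_closed(4)[OF subF] by blast
  have rk: "rk F x = length ws"
    unfolding rk_def S_def[symmetric]
  proof (rule Least_equality)
    show "\<exists>B. finite B \<and> card B = length ws \<and> S \<subseteq> Fspan F B"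
    proof (intro exI conjI)
      show "finite (set ws)" by simp
      show "card (set ws) = length ws" using ws(2) by (simp add: distinct_card)
      show "S \<subseteq> Fspan F (set ws)" using Fspan_lsp[of ws "set ws"] Sl ws(3) by simp
    qed
  next
    fix d assume "\<exists>B. finite B \<and> card B = d \<and> S \<subseteq> Fspan F B"
    then obtain B where B: "finite B" "card B = d" "S \<subseteq> Fspan F B" by blast
    obtain bs where bs: "set bs = B" "distinct bs" using finite_distinct_list[OF B(1)] by auto
    have "S \<subseteq> lsp (*) F bs" using B(3) Fspan_lsp[OF bs(1)] by simp
    then have "lsp (*) F vs \<subseteq> lsp (*) F bs"
      using vs(1) vector_space_over_itself.lsp_closed[OF subF]
      by (intro vector_space_over_itself.lsp_least[OF subF]) auto
    then have "card (lsp (*) F vs) \<le> card (lsp (*) F bs)" by (intro card_mono) simp_all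
    also have "\<dots> \<le> card F ^ length bs"
      by (rule vector_space_over_itself.card_lsp_le[OF subF]) simp_all
    finally have "q ^ length ws \<le> q ^ length bs" using ws cardF by simp
    then have "length ws \<le> length bs" using q2 by (simp add: power_le_imp_le_exp)
    then show "length ws \<le> d" using bs B by (simp add: distinct_card[symmetric])
  qed
  show "q ^ rk F x = card (Fspan F (range (\<lambda>i. x$i)))"
    using rk ws cardF Fspan_lsp[OF vs(1)] by (simp add: S_def)
  have "length ws = card (set ws)" using ws(2) by (simp add: distinct_card)
  also have "\<dots> \<le> card S" using ws(1) vs(1) by (intro card_mono) auto
  also have "\<dots> \<le> CARD('n)" unfolding S_def by (rule card_image_le) simp
  finally show "rk F x \<le> CARD('n)" using rk by simp
qed

definition RR :: "'a ^ 'n \<Rightarrow> ('a ^ 'n) set" where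
  "RR x = {l \<in> Vn F. dotp l x = 0}"

lemma ssub_RR: "ssub F (RR x)"
proof -
  have "RR x \<subseteq> Vn F" by (auto simp: RR_def)
  moreover have "0 \<in> RR x" using Vn_closed(1)[OF subF] by (simp add: RR_def)
  moreover have "\<forall>a\<in>RR x. \<forall>b\<in>RR x. a + b \<in> RR x"
  proof (intro ballI)
    fix a b assume "a \<in> RR x" "b \<in> RR x"
    then show "a + b \<in> RR x" by (simp add: RR_def dotp_add_left Vn_closed(2)[OF subF])
  qed
  moreover have "\<forall>c\<in>F. \<forall>a\<in>RR x. c *s a \<in> RR x"
  proof (intro ballI)
    fix c a assume "c \<in> F" "a \<in> RR x"
    then show "c *s a \<in> RR x" by (simp add: RR_def dotp_scale_left Vn_closed(3)[OF subF])
  qed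
  ultimately show ?thesis unfolding ssub_def by blast
qed

lemma card_RR:
  fixes x :: "'a ^ 'n"
  shows "card (RR x) = q ^ (CARD('n) - rk F x)"
proof -
  define f where "f l = dotp l x" for l
  obtain vs where vs: "set vs = range (\<lambda>i. x$i)" using finite_list[of "range (\<lambda>i. x$i)"] by auto
  have img: "f ` Vn F = lsp (*) F vs"
  proof
    show "f ` Vn F \<subseteq> lsp (*) F vs"
    proof
      fix y assume "y \<in> f ` Vn F"
      then obtain l where l: "l \<in> Vn F" "y = dotp l x" by (auto simp: f_def)
      have "(\<Sum>i\<in>UNIV. l$i * x$i) \<in> lsp (*) F vs"
      proof (rule vector_space_over_itself.lsp_sum[OF subF])
        fix i :: 'n
        have "x$i \<in> lsp (*) F vs" using vs vector_space_over_itself.lsp_closed(4)[OF subF] by auto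
        moreover have "l$i \<in> F" using l by (simp add: Vn_def)
        ultimately show "l$i * x$i \<in> lsp (*) F vs" using vector_space_over_itself.lsp_closed(3)[OF subF] by simp
      qed
      then show "y \<in> lsp (*) F vs" using l by (simp add: dotp_def)
    qed
    show "lsp (*) F vs \<subseteq> f ` Vn F"
    proof (rule vector_space_over_itself.lsp_least[OF subF])
      have "f 0 = 0" by (simp add: f_def)
      then show "0 \<in> f ` Vn F" using Vn_closed(1)[OF subF] by (metis image_eqI)
      show "a + b \<in> f ` Vn F" if ab: "a \<in> f ` Vn F" "b \<in> f ` Vn F" for a b
      proof -
        obtain la lb where "la \<in> Vn F" "lb \<in> Vn F" "a = f la" "b = f lb" using ab by blast
        then have "a + b = f (la + lb)" "la + lb \<in> Vn F" using Vn_closed(2)[OF subF] by (simp_all add: f_def dotp_add_left)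
        then show ?thesis by (metis image_eqI)
      qed
      show "c * a \<in> f ` Vn F" if ca: "c \<in> F" "a \<in> f ` Vn F" for c a
      proof -
        obtain la where "la \<in> Vn F" "a = f la" using ca by blast
        then have "c * a = f (c *s la)" "c *s la \<in> Vn F" using Vn_closed(3)[OF subF] ca by (simp_all add: f_def dotp_scale_left)
        then show ?thesis by (metis image_eqI)
      qed
      show "set vs \<subseteq> f ` Vn F"
      proof
        fix y assume "y \<in> set vs"
        then obtain i where "y = x$i" using vs by auto
        then have "y = f (axis i 1)" by (simp add: f_def dotp_axis)
        then show "y \<in> f ` Vn F" using Vn_closed(4)[OF subF] by blast
      qed
    qed
  qed
  have "card (Vn F :: ('a^'n) set) = card (f ` Vn F) * card {l\<in>Vn F. f l = 0}"
    by (rule additive_count[OF subF ssub_Vn[OF subF]]) (simp_all add: f_def dotp_add_left)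
  moreover have "card (Vn F :: ('a^'n) set) = q ^ CARD('n)" using card_Vn cardF by metis
  ultimately have "q ^ CARD('n) = q ^ rk F x * card (RR x)"
    using img rk_props(1)[of x] Fspan_lsp[OF vs] by (simp add: RR_def f_def)
  then have "q ^ rk F x * q ^ (CARD('n) - rk F x) = q ^ rk F x * card (RR x)"
    using rk_props(2)[of x] by (simp flip: power_add)
  then show ?thesis using q2 by simp
qed

end

(* ---- part E ---- *)
context gsetup
begin

definition indl :: "nat \<Rightarrow> ('a ^ 'n) set \<Rightarrow> ('a ^ 'n) list set" where
  "indl d V0 = {vs. length vs = d \<and> set vs \<subseteq> V0 \<and> card (lsp (*s) F vs) = q ^ d}"

definition subs :: "nat \<Rightarrow> ('a ^ 'n) set \<Rightarrow> ('a ^ 'n) set set" where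
  "subs d V0 = {U. ssub F U \<and> U \<subseteq> V0 \<and> card U = q ^ d}"

lemma lsp_sub_ssub:
  fixes V0 :: "('a ^ 'n) set"
  assumes V0: "ssub F V0" and vs: "set vs \<subseteq> V0"
  shows "lsp (*s) F vs \<subseteq> V0"
  using V0 vs unfolding ssub_def by (intro vec.lsp_least[OF subF]) auto

lemma ssub_lsp:
  fixes vs :: "('a ^ 'n) list"
  assumes vs: "set vs \<subseteq> Vn F"
  shows "ssub F (lsp (*s) F vs)"
proof -
  have "lsp (*s) F vs \<subseteq> Vn F" using lsp_sub_ssub[OF ssub_Vn[OF subF] vs] .
  then show ?thesis unfolding ssub_def using vec.lsp_closed[OF subF] by blast
qed

lemma card_indl:
  fixes V0 :: "('a ^ 'n) set"
  assumes V0: "ssub F V0" and cV: "card V0 = q ^ e"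
  shows "real (card (indl d V0)) = alpha (real q) e d"
proof (induction d)
  case 0
  have "indl 0 V0 = {[]}"
  proof
    show "indl 0 V0 \<subseteq> {[]}" unfolding indl_def by (simp add: subset_iff)
    have "lsp (*s) F ([] :: ('a^'n) list) = {0}" by (rule vec.lsp_Nil[OF subF])
    then show "{[]} \<subseteq> indl 0 V0" unfolding indl_def by simp
  qed
  then show ?case by simp
next
  case (Suc d)
  have q1: "1 < q" using q2 by simp
  have cardle: "card (lsp (*s) F vs) \<le> q ^ length vs" for vs :: "('a ^ 'n) list"
  proof -
    have "card (lsp (*s) F vs) \<le> card F ^ length vs" by (rule vec.card_lsp_le[OF subF]) simp_all
    then show ?thesis using cardF by simp
  qed
  have eq: "indl (Suc d) V0 = (\<lambda>p. snd p # fst p) ` (SIGMA vs:indl d V0. V0 - lsp (*s) F vs)"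
    (is "?L = ?R")
  proof (intro set_eqI iffI)
    fix ws assume ws: "ws \<in> ?L"
    then have lw: "length ws = Suc d" by (simp add: indl_def)
    then obtain v vs where wv: "ws = v # vs" "length vs = d" by (cases ws) auto
    have sv: "set (v#vs) \<subseteq> V0" "card (lsp (*s) F (v#vs)) = q ^ Suc d" using ws wv by (auto simp: indl_def)
    have nv: "v \<notin> lsp (*s) F vs"
    proof
      assume "v \<in> lsp (*s) F vs"
      then have "card (lsp (*s) F (v#vs)) = card (lsp (*s) F vs)" using vec.lsp_Cons_mem[OF subF, of v vs] by simp
      also have "\<dots> \<le> q ^ d" using cardle[of vs] wv by simp
      also have "\<dots> < q ^ Suc d" using q1 by simp
      finally show False using sv by simp
    qed
    have "card (lsp (*s) F (v#vs)) = card F * card (lsp (*s) F vs)"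
      by (rule vec.card_lsp_Cons[OF subF _ _ nv]) simp_all
    then have "card (lsp (*s) F (v#vs)) = q * card (lsp (*s) F vs)" using cardF by simp
    then have "card (lsp (*s) F vs) = q ^ d" using sv q1 by simp
    then have "vs \<in> indl d V0" "v \<in> V0 - lsp (*s) F vs" using wv sv nv by (auto simp: indl_def)
    then have "(vs, v) \<in> (SIGMA vs:indl d V0. V0 - lsp (*s) F vs)" by blast
    moreover have "ws = (\<lambda>p. snd p # fst p) (vs, v)" using wv by simp
    ultimately show "ws \<in> ?R" by (rule rev_image_eqI)
  next
    fix ws assume "ws \<in> ?R"
    then obtain p where p: "p \<in> (SIGMA vs:indl d V0. V0 - lsp (*s) F vs)" "ws = snd p # fst p" by blast
    obtain vs v where "p = (vs, v)" by (cases p)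
    then have vv: "ws = v # vs" "vs \<in> indl d V0" "v \<in> V0" "v \<notin> lsp (*s) F vs" using p by auto
    have "card (lsp (*s) F (v#vs)) = card F * card (lsp (*s) F vs)"
      by (rule vec.card_lsp_Cons[OF subF _ _ vv(4)]) simp_all
    then have "card (lsp (*s) F (v#vs)) = q * card (lsp (*s) F vs)" using cardF by simp
    then show "ws \<in> ?L" using vv by (auto simp: indl_def)
  qed
  have fin: "finite (indl d V0)"
  proof (rule finite_subset)
    show "indl d V0 \<subseteq> {xs. set xs \<subseteq> V0 \<and> length xs = d}" by (auto simp: indl_def)
    show "finite {xs. set xs \<subseteq> V0 \<and> length xs = d}" by (rule finite_lists_length_eq) simp
  qed
  have inj: "inj_on (\<lambda>p. snd p # fst p) (SIGMA vs:indl d V0. V0 - lsp (*s) F vs)"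
    by (rule inj_onI) (simp add: prod_eq_iff)
  have cD: "card (V0 - lsp (*s) F vs) = q ^ e - q ^ d" if "vs \<in> indl d V0" for vs
  proof -
    have "lsp (*s) F vs \<subseteq> V0" using that lsp_sub_ssub[OF V0] by (auto simp: indl_def)
    then show ?thesis using that cV by (simp add: card_Diff_subset indl_def)
  qed
  have "card (indl (Suc d) V0) = (\<Sum>vs\<in>indl d V0. card (V0 - lsp (*s) F vs))"
    unfolding eq using fin by (simp add: card_image[OF inj] card_SigmaI)
  also have "\<dots> = card (indl d V0) * (q ^ e - q ^ d)" using cD by simp
  finally have c: "real (card (indl (Suc d) V0)) = alpha (real q) e d * real (q ^ e - q ^ d)"
    using Suc by simp
  show ?case
  proof (cases "d \<le> e")
    case True
    then have "q ^ d \<le> q ^ e" using q1 by (simp add: power_increasing)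
    then have "real (q ^ e - q ^ d) = real q ^ e - real q ^ d" by (simp add: of_nat_diff)
    then show ?thesis using c by (simp add: alpha_Suc)
  next
    case False
    then show ?thesis using c by (simp add: alpha_big)
  qed
qed

lemma card_subs:
  fixes V0 :: "('a ^ 'n) set"
  assumes V0: "ssub F V0" and cV: "card V0 = q ^ e"
  shows "real (card (subs d V0)) = gb (real q) e d"
proof -
  have q1: "1 < real q" using q2 by simp
  have V0F: "V0 \<subseteq> Vn F" using V0 by (simp add: ssub_def)
  have U: "indl d V0 = (\<Union>U\<in>subs d V0. indl d U)"
  proof (intro set_eqI iffI)
    fix vs assume vs: "vs \<in> indl d V0"
    have sv: "set vs \<subseteq> V0" using vs by (simp add: indl_def)
    have "lsp (*s) F vs \<in> subs d V0"
      using vs ssub_lsp[of vs] sv V0F lsp_sub_ssub[OF V0 sv] by (auto simp: subs_def indl_def)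
    moreover have "vs \<in> indl d (lsp (*s) F vs)"
      using vs vec.lsp_closed(4)[OF subF] by (auto simp: indl_def)
    ultimately show "vs \<in> (\<Union>U\<in>subs d V0. indl d U)" by blast
  next
    fix vs assume "vs \<in> (\<Union>U\<in>subs d V0. indl d U)"
    then show "vs \<in> indl d V0" by (auto simp: indl_def subs_def)
  qed
  have lspU: "lsp (*s) F vs = U" if "U \<in> subs d V0" "vs \<in> indl d U" for U vs
  proof -
    have "lsp (*s) F vs \<subseteq> U" using that lsp_sub_ssub[of U vs] by (auto simp: subs_def indl_def)
    moreover have "card (lsp (*s) F vs) = card U" using that by (simp add: subs_def indl_def)
    ultimately show ?thesis by (intro card_subset_eq) simp_all
  qed
  have finS: "finite (subs d V0)"
    by (rule finite_subset[of _ "Pow V0"]) (auto simp: subs_def)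
  have "card (indl d V0) = (\<Sum>U\<in>subs d V0. card (indl d U))"
    unfolding U
  proof (rule card_UN_disjoint[OF finS])
    show "\<forall>U\<in>subs d V0. finite (indl d U)"
    proof
      fix U assume "U \<in> subs d V0"
      show "finite (indl d U)"
        by (rule finite_subset[of _ "{xs. set xs \<subseteq> U \<and> length xs = d}"])
           (auto simp: indl_def intro: finite_lists_length_eq)
    qed
    show "\<forall>U\<in>subs d V0. \<forall>U'\<in>subs d V0. U \<noteq> U' \<longrightarrow> indl d U \<inter> indl d U' = {}"
      using lspU by blast
  qed
  also have "real \<dots> = (\<Sum>U\<in>subs d V0. alpha (real q) d d)"
    by (simp add: card_indl subs_def)
  finally have "real (card (indl d V0)) = real (card (subs d V0)) * alpha (real q) d d" by simp
  moreover have "real (card (indl d V0)) = alpha (real q) e d" by (rule card_indl[OF V0 cV])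
  moreover have "alpha (real q) d d > 0" using alpha_pos[OF q1] by simp
  ultimately show ?thesis by (simp add: gb_def field_simps)
qed

end

(* ---- part G ---- *)
lemma real_card_filter: "finite A \<Longrightarrow> real (card {x\<in>A. P x}) = (\<Sum>x\<in>A. if P x then 1 else 0)"
  by (simp add: sum.If_cases Collect_conj_eq Int_commute)

lemma perp_anti: "A \<subseteq> B \<Longrightarrow> perp S B \<subseteq> perp S A"
  by (auto simp: perp_def)

lemma dual_code_perp: "dual_code C = perp UNIV C"
  by (simp add: dual_code_def perp_def dotp_def)

lemma subspace_ssub: "vec.subspace C \<Longrightarrow> ssub UNIV C"
  unfolding ssub_def vec.subspace_def by simp

context gsetup
begin

lemma subs_RR:
  fixes x :: "'a ^ 'n"
  shows "subs u (RR x) = {U \<in> subs u (Vn F). x \<in> perp UNIV U}"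
proof (intro set_eqI iffI)
  fix U assume "U \<in> subs u (RR x)"
  then have U: "ssub F U" "U \<subseteq> RR x" "card U = q ^ u" by (auto simp: subs_def)
  have "U \<subseteq> Vn F" using U(1) by (simp add: ssub_def)
  moreover have "\<forall>v\<in>U. dotp x v = 0" using U(2) by (auto simp: RR_def dotp_comm)
  ultimately show "U \<in> {U \<in> subs u (Vn F). x \<in> perp UNIV U}" using U by (simp add: subs_def perp_def)
next
  fix U assume "U \<in> {U \<in> subs u (Vn F). x \<in> perp UNIV U}"
  then have U: "ssub F U" "U \<subseteq> Vn F" "card U = q ^ u" "\<forall>v\<in>U. dotp x v = 0" by (auto simp: subs_def perp_def)
  then have "U \<subseteq> RR x" by (auto simp: RR_def dotp_comm)
  then show "U \<in> subs u (RR x)" using U by (simp add: subs_def)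
qed

lemma sum_swap_subs:
  fixes D :: "('a ^ 'n) set"
  shows "(\<Sum>x\<in>D. real (card (subs u (RR x)))) = (\<Sum>U\<in>subs u (Vn F). real (card (D \<inter> perp UNIV U)))"
proof -
  have finS: "finite (subs u (Vn F :: ('a^'n) set))" by simp
  have "(\<Sum>x\<in>D. real (card (subs u (RR x)))) = (\<Sum>x\<in>D. \<Sum>U\<in>subs u (Vn F). if x \<in> perp UNIV U then 1 else 0)"
    by (rule sum.cong[OF refl]) (simp add: subs_RR real_card_filter)
  also have "\<dots> = (\<Sum>U\<in>subs u (Vn F). \<Sum>x\<in>D. if x \<in> perp UNIV U then 1 else 0)"
    by (rule sum.swap)
  also have "\<dots> = (\<Sum>U\<in>subs u (Vn F). real (card (D \<inter> perp UNIV U)))"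
  proof (rule sum.cong[OF refl])
    fix U :: "('a^'n) set"
    have "D \<inter> perp UNIV U = {x\<in>D. x \<in> perp UNIV U}" by auto
    then show "(\<Sum>x\<in>D. if x \<in> perp UNIV U then 1 else 0) = real (card (D \<inter> perp UNIV U))"
      by (simp add: real_card_filter)
  qed
  finally show ?thesis .
qed

lemma card_RR_subs:
  fixes x :: "'a ^ 'n"
  shows "real (card (subs u (RR x))) = gb (real q) (CARD('n) - rk F x) u"
  by (rule card_subs[OF ssub_RR card_RR])

lemma perp_F_card:
  fixes U :: "('a ^ 'n) set"
  assumes U: "U \<in> subs u (Vn F)" and un: "u \<le> CARD('n)"
  shows "card (perp F U) = q ^ (CARD('n) - u)"
proof -
  have "card U * card (perp F U) = card F ^ CARD('n)" using U by (intro perp_card[OF subF]) (simp add: subs_def)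
  then have "q ^ u * card (perp F U) = q ^ u * q ^ (CARD('n) - u)"
    using U un cardF by (simp add: subs_def flip: power_add)
  then show ?thesis using q2 by simp
qed

lemma perp_K_eq:
  fixes U :: "('a ^ 'n) set"
  assumes U: "U \<in> subs u (Vn F)" and un: "u \<le> CARD('n)"
  shows "perp UNIV (perp UNIV U) = perp UNIV (perp F U)" and "card (perp UNIV (perp F U)) = (q ^ m) ^ u"
proof -
  have UF: "U \<subseteq> Vn F" "ssub F U" using U by (auto simp: subs_def)
  have cU: "card U = q ^ u" using U by (simp add: subs_def)
  have W: "card (perp UNIV U) = (q ^ (CARD('n) - u)) ^ m"
    using descent[OF UF(1)] perp_F_card[OF U un] by simp
  define Q where "Q = q ^ m"
  have Wc: "card (perp UNIV U) = Q ^ (CARD('n) - u)" using W unfolding Q_def by (metis power_mult mult.commute)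
  have "card (perp UNIV U) * card (perp UNIV (perp UNIV U)) = CARD('a) ^ CARD('n)"
    by (rule perp_card[OF subfield_UNIV ssub_perp[OF subfield_UNIV]])
  moreover have "CARD('a) ^ CARD('n) = Q ^ (CARD('n) - u) * Q ^ u"
    using un by (simp add: cardK Q_def flip: power_add)
  ultimately have "Q ^ (CARD('n) - u) * card (perp UNIV (perp UNIV U)) = Q ^ (CARD('n) - u) * Q ^ u"
    using Wc by simp
  moreover have "Q > 0" using q2 by (simp add: Q_def)
  ultimately have c1: "card (perp UNIV (perp UNIV U)) = (q ^ m) ^ u" using q2 by (simp add: Q_def)
  have "card (perp UNIV (perp F U)) = card (perp F (perp F U)) ^ m"
    by (rule descent) (rule perp_subset)
  also have "perp F (perp F U) = U" by (rule perp_perp[OF subF UF(2)])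
  finally show c2: "card (perp UNIV (perp F U)) = (q ^ m) ^ u" using cU by (simp add: power_mult[symmetric] mult.commute)
  have "perp F U \<subseteq> perp UNIV U" by (auto simp: perp_def Vn_def)
  then have "perp UNIV (perp UNIV U) \<subseteq> perp UNIV (perp F U)" by (rule perp_anti)
  then show "perp UNIV (perp UNIV U) = perp UNIV (perp F U)"
    using c1 c2 by (intro card_subset_eq) simp_all
qed

lemma perp_F_bij:
  assumes un: "u \<le> CARD('n)"
  shows "bij_betw (perp F) (subs u (Vn F :: ('a^'n) set)) (subs (CARD('n) - u) (Vn F))"
proof (rule bij_betwI[where g = "perp F"])
  show "perp F \<in> subs u (Vn F :: ('a^'n) set) \<rightarrow> subs (CARD('n) - u) (Vn F)"
  proof
    fix U :: "('a^'n) set" assume U: "U \<in> subs u (Vn F)"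
    have "card (perp F U) = q ^ (CARD('n) - u)" by (rule perp_F_card[OF U un])
    then show "perp F U \<in> subs (CARD('n) - u) (Vn F)"
      using ssub_perp[OF subF, of U] perp_subset[of F U] by (simp add: subs_def)
  qed
  show "perp F \<in> subs (CARD('n) - u) (Vn F :: ('a^'n) set) \<rightarrow> subs u (Vn F)"
  proof
    fix U :: "('a^'n) set" assume U: "U \<in> subs (CARD('n) - u) (Vn F)"
    have "card (perp F U) = q ^ (CARD('n) - (CARD('n) - u))" by (rule perp_F_card[OF U]) simp
    then show "perp F U \<in> subs u (Vn F)" using un ssub_perp[OF subF, of U] perp_subset[of F U] by (simp add: subs_def)
  qed
  show "perp F (perp F U) = U" if "U \<in> subs u (Vn F :: ('a^'n) set)" for U
    using that perp_perp[OF subF, of U] by (simp add: subs_def)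
  show "perp F (perp F U) = U" if "U \<in> subs (CARD('n) - u) (Vn F :: ('a^'n) set)" for U
    using that perp_perp[OF subF, of U] by (simp add: subs_def)
qed

lemma CI:
  fixes C :: "('a ^ 'n) set"
  assumes C: "vec.subspace C" and un: "u \<le> CARD('n)"
  shows "real (q ^ m) ^ u * (\<Sum>x\<in>C. gb (real q) (CARD('n) - rk F x) u)
       = real (card C) * (\<Sum>y\<in>dual_code C. gb (real q) (CARD('n) - rk F y) (CARD('n) - u))"
proof -
  have CK: "ssub UNIV C" by (rule subspace_ssub[OF C])
  have step: "real (card (C \<inter> perp UNIV U)) * real (q ^ m) ^ u
      = real (card C) * real (card (dual_code C \<inter> perp UNIV (perp F U)))"
    if U: "U \<in> subs u (Vn F)" for U :: "('a^'n) set"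
  proof -
    have "card (C \<inter> perp UNIV U) * card (perp UNIV (perp UNIV U)) = card C * card (perp UNIV C \<inter> perp UNIV (perp UNIV U))"
      by (rule key_K[OF CK ssub_perp[OF subfield_UNIV]])
    then have "card (C \<inter> perp UNIV U) * (q ^ m) ^ u = card C * card (dual_code C \<inter> perp UNIV (perp F U))"
      using perp_K_eq[OF U un] by (simp add: dual_code_perp)
    then show ?thesis by (metis of_nat_mult of_nat_power)
  qed
  have "real (q ^ m) ^ u * (\<Sum>x\<in>C. gb (real q) (CARD('n) - rk F x) u)
      = real (q ^ m) ^ u * (\<Sum>U\<in>subs u (Vn F). real (card (C \<inter> perp UNIV U)))"
  proof -
    have "(\<Sum>x\<in>C. gb (real q) (CARD('n) - rk F x) u) = (\<Sum>x\<in>C. real (card (subs u (RR x))))"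
      by (rule sum.cong[OF refl]) (rule card_RR_subs[symmetric])
    then show ?thesis using sum_swap_subs[of u C] by simp
  qed
  also have "\<dots> = (\<Sum>U\<in>subs u (Vn F). real (card (C \<inter> perp UNIV U)) * real (q ^ m) ^ u)"
    by (simp only: sum_distrib_left mult.commute)
  also have "\<dots> = (\<Sum>U\<in>subs u (Vn F). real (card C) * real (card (dual_code C \<inter> perp UNIV (perp F U))))"
    by (rule sum.cong[OF refl]) (rule step)
  also have "\<dots> = real (card C) * (\<Sum>U\<in>subs u (Vn F). real (card (dual_code C \<inter> perp UNIV (perp F U))))"
    by (simp add: sum_distrib_left)
  also have "(\<Sum>U\<in>subs u (Vn F). real (card (dual_code C \<inter> perp UNIV (perp F U))))
      = (\<Sum>U\<in>subs (CARD('n) - u) (Vn F). real (card (dual_code C \<inter> perp UNIV U)))"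
    using sum.reindex_bij_betw[OF perp_F_bij[OF un], of "\<lambda>U. real (card (dual_code C \<inter> perp UNIV U))"] by simp
  also have "\<dots> = (\<Sum>y\<in>dual_code C. gb (real q) (CARD('n) - rk F y) (CARD('n) - u))"
  proof -
    have "(\<Sum>x\<in>dual_code C. gb (real q) (CARD('n) - rk F x) (CARD('n) - u)) = (\<Sum>x\<in>dual_code C. real (card (subs (CARD('n) - u) (RR x))))"
      by (rule sum.cong[OF refl]) (rule card_RR_subs[symmetric])
    then show ?thesis using sum_swap_subs[of "CARD('n) - u" "dual_code C"] by simp
  qed
  finally show ?thesis .
qed

end

(* ---- part H ---- *)
lemma uniq:
  fixes D :: "nat \<Rightarrow> real" and q :: real
  assumes h: "\<And>u. u \<le> n \<Longrightarrow> (\<Sum>j=0..n. D j * gb q (n-j) (n-u)) = 0" and q: "1 < q"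
  shows "j \<le> n \<Longrightarrow> D j = 0"
proof (induction j rule: less_induct)
  case (less j)
  have "(\<Sum>j'=0..n. D j' * gb q (n-j') (n-j)) = (\<Sum>j'=0..n. if j' = j then D j else 0)"
  proof (rule sum.cong[OF refl])
    fix j' assume j': "j' \<in> {0..n}"
    show "D j' * gb q (n-j') (n-j) = (if j' = j then D j else 0)"
    proof (cases "j' < j")
      case True then show ?thesis using less j' by simp
    next
      case False
      show ?thesis
      proof (cases "j' = j")
        case True then show ?thesis using gb_self[OF q] by simp
      next
        case False
        then have "n - j' < n - j" using \<open>\<not> j' < j\<close> j' less(2) by auto
        then show ?thesis using False gb_big by simp
      qed
    qed
  qed
  also have "\<dots> = D j" using less(2) by simp
  finally show ?case using h[of j] less(2) by simp
qed

lemma sum_by_rank: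
  fixes D :: "('a::{field,finite} ^ 'n) set" and f :: "nat \<Rightarrow> real"
  assumes "\<And>x::'a^'n. rk F x \<le> CARD('n)"
  shows "(\<Sum>x\<in>D. f (rk F x)) = (\<Sum>i=0..CARD('n). real (card {x\<in>D. rk F x = i}) * f i)"
proof -
  have "(\<Sum>x\<in>D. f (rk F x)) = (\<Sum>i\<in>{0..CARD('n)}. \<Sum>x\<in>{x\<in>D. rk F x = i}. f (rk F x))"
    by (rule sum.group[symmetric]) (use assms in auto)
  also have "\<dots> = (\<Sum>i=0..CARD('n). real (card {x\<in>D. rk F x = i}) * f i)"
    by (rule sum.cong[OF refl]) simp
  finally show ?thesis .
qed

theorem theorem1:
  fixes F :: "'a::{field,finite} set"
    and C :: "('a ^ 'n) set"
    and q m k :: nat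
  assumes "is_subfield F"
    and "card F = q"
    and "m \<ge> 1"
    and "CARD('a) = q ^ m"
    and "vec.subspace C"
    and "vec.dim C = k"
  shows "\<forall>j\<le>CARD('n).
           hc (rank_we F (dual_code C)) j (int m)
           = hc (qtransform_at q (rank_we F C) (Xpoly q) Ypoly) j (int m) / real (card C)"
proof -
  interpret gsetup F q m using assms(1,2,4) by unfold_locales
  define n where "n = CARD('n)"
  define A where "A i = real (card {x\<in>C. rk F x = i})" for i
  define B where "B j = real (card {x\<in>dual_code C. rk F x = j})" for j
  define Q where "Q = real (q ^ m)"
  define B' where "B' j = (\<Sum>i=0..n. A i * PP q (int m) i n j) / real (card C)" for j
  have q1: "1 < real q" using q2 by simp
  have q1n: "1 < q" using q2 by simp
  have rkn: "\<And>x::'a^'n. rk F x \<le> n" using rk_props(2) by (simp add: n_def)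
  have cC: "real (card C) > 0"
    using assms(5) by (auto simp: vec.subspace_def card_gt_0_iff)
  have CI': "Q ^ u * (\<Sum>i=0..n. A i * gb (real q) (n - i) u) = real (card C) * (\<Sum>j=0..n. B j * gb (real q) (n - j) (n - u))"
    if u: "u \<le> n" for u
  proof -
    have "Q ^ u * (\<Sum>x\<in>C. gb (real q) (n - rk F x) u) = real (card C) * (\<Sum>y\<in>dual_code C. gb (real q) (n - rk F y) (n - u))"
      using CI[OF assms(5), of u] u by (simp add: n_def Q_def)
    moreover have "(\<Sum>x\<in>C. gb (real q) (n - rk F x) u) = (\<Sum>i=0..n. A i * gb (real q) (n - i) u)"
      using sum_by_rank[where F = F and D = C and f = "\<lambda>i. gb (real q) (n - i) u"] rkn by (simp add: A_def n_def)
    moreover have "(\<Sum>y\<in>dual_code C. gb (real q) (n - rk F y) (n - u)) = (\<Sum>j=0..n. B j * gb (real q) (n - j) (n - u))"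
      using sum_by_rank[where F = F and D = "dual_code C" and f = "\<lambda>j. gb (real q) (n - j) (n - u)"] rkn by (simp add: B_def n_def)
    ultimately show ?thesis by simp
  qed
  have QM: "real q powi int m = Q" by (simp add: Q_def power_int_of_nat)
  have B'eq: "(\<Sum>j=0..n. B' j * gb (real q) (n - j) (n - u)) = (\<Sum>j=0..n. B j * gb (real q) (n - j) (n - u))"
    if u: "u \<le> n" for u
  proof -
    have "(\<Sum>j=0..n. B' j * gb (real q) (n - j) (n - u))
        = (\<Sum>i=0..n. A i * (\<Sum>j=0..n. PP q (int m) i n j * gb (real q) (n - j) (n - u))) / real (card C)"
  proof -
    have "(\<Sum>j=0..n. B' j * gb (real q) (n - j) (n - u))
        = (\<Sum>j=0..n. \<Sum>i=0..n. A i * PP q (int m) i n j * gb (real q) (n - j) (n - u)) / real (card C)"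
      unfolding B'_def sum_divide_distrib by (rule sum.cong[OF refl]) (simp add: sum_distrib_right)
    also have "(\<Sum>j=0..n. \<Sum>i=0..n. A i * PP q (int m) i n j * gb (real q) (n - j) (n - u))
        = (\<Sum>i=0..n. \<Sum>j=0..n. A i * PP q (int m) i n j * gb (real q) (n - j) (n - u))"
      by (rule sum.swap)
    also have "\<dots> = (\<Sum>i=0..n. A i * (\<Sum>j=0..n. PP q (int m) i n j * gb (real q) (n - j) (n - u)))"
      by (simp add: sum_distrib_left mult.assoc)
    finally show ?thesis .
  qed
    also have "\<dots> = (\<Sum>i=0..n. A i * (Q ^ u * gb (real q) (n - i) u)) / real (card C)"
      using AI[OF q1n _ u, of _ "int m"] QM
      by (intro arg_cong[where f = "\<lambda>x. x / real (card C)"] sum.cong) simp_all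
    also have "\<dots> = Q ^ u * (\<Sum>i=0..n. A i * gb (real q) (n - i) u) / real (card C)"
      by (simp add: sum_distrib_left mult_ac)
    also have "\<dots> = real (card C) * (\<Sum>j=0..n. B j * gb (real q) (n - j) (n - u)) / real (card C)"
      using CI'[OF u] by simp
    also have "\<dots> = (\<Sum>j=0..n. B j * gb (real q) (n - j) (n - u))"
    proof -
      have "real (card C) \<noteq> 0" using cC by linarith
      then show ?thesis by simp
    qed
    finally show ?thesis .
  qed
  have D0: "B j - B' j = 0" if "j \<le> n" for j
  proof (rule uniq[OF _ q1 that])
    fix u assume "u \<le> n"
    then show "(\<Sum>j=0..n. (B j - B' j) * gb (real q) (n - j) (n - u)) = 0"
      using B'eq by (simp add: left_diff_distrib sum_subtractf)
  qed
  show ?thesis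
  proof (intro allI impI)
    fix j assume j: "j \<le> CARD('n)"
    have "hc (rank_we F (dual_code C)) j (int m) = B j"
      using j by (simp add: hc_def rank_we_def B_def)
    moreover have "hc (qtransform_at q (rank_we F C) (Xpoly q) Ypoly) j (int m) = (\<Sum>i=0..n. A i * PP q (int m) i n j)"
      using j by (simp add: qtransform_at_def hc_pair hc_def[of "rank_we F C"] rank_we_def A_def PP_def n_def)
    ultimately show "hc (rank_we F (dual_code C)) j (int m) = hc (qtransform_at q (rank_we F C) (Xpoly q) Ypoly) j (int m) / real (card C)"
      using D0[of j] j by (simp add: B'_def n_def)
  qed
qed

end
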